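(* Let $\mathsf{M}_{\rho_0}[\boldsymbol{\alpha}]\triangleq\mathbb{E}_{\rho_0(\mathbf{x})}[\boldsymbol{\alpha}(\mathbf{x})\boldsymbol{\alpha}(\mathbf{x})^\intercal]$ and $\mathsf{M}_{\rho_1}[\boldsymbol{\beta}]\triangleq\mathbb{E}_{\rho_1(\mathbf{x}')}[\boldsymbol{\beta}(\mathbf{x}')\boldsymbol{\beta}(\mathbf{x}')^\intercal]$ (assumed invertible), and define $\mathsf{S}^{\mathsf{sqrt}}_{\rho_0,\rho_1}[\boldsymbol{\alpha},\boldsymbol{\beta}]\triangleq (\mathsf{M}_{\rho_0}[\boldsymbol{\alpha}])^{1/2}(\mathsf{M}_{\rho_1}[\boldsymbol{\beta}])^{1/2}$. Then this matrix shares the same spectrum as the kernel $k$: there exist matrices $\mathsf{U},\mathsf{V}$ with orthonormal columns and $\Sigma=\mathsf{diag}(\sigma_1,\ldots,\sigma_r)$ such that $\mathsf{S}^{\mathsf{sqrt}}_{\rho_0,\rho_1}[\boldsymbol{\alpha},\boldsymbol{\beta}]=\mathsf{U}\Sigma\mathsf{V}^\intercal=\sum_{i=1}^r\sigma_i\mathbf{u}_i\mathbf{v}_i^\intercal$, where $\sigma_i$ are the singular values in the SVD $k(\mathbf{x},\mathbf{x}')=\sum_{i=1}^r\sigma_i\phi_i(\mathbf{x})\psi_i(\mathbf{x}')$. Moreover, the ordered, normalized singular functions of $k$ are given by $\boldsymbol{\phi}(\mathbf{x})=\mathsf{U}^\intercal(\mathsf{M}_{\rho_0}[\boldsymbol{\alpha}])^{-1/2}\boldsymbol{\alpha}(\mathbf{x})$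 and $\boldsymbol{\psi}(\mathbf{x}')=\mathsf{V}^\intercal(\mathsf{M}_{\rho_1}[\boldsymbol{\beta}])^{-1/2}\boldsymbol{\beta}(\mathbf{x}')$; i.e., $\mathbb{E}_{\rho_0}[\boldsymbol{\phi}\boldsymbol{\phi}^\intercal]=\mathbb{E}_{\rho_1}[\boldsymbol{\psi}\boldsymbol{\psi}^\intercal]=\mathsf{I}$, $k(\mathbf{x},\mathbf{x}')=\boldsymbol{\phi}(\mathbf{x})^\intercal\Sigma\boldsymbol{\psi}(\mathbf{x}')$, $(\mathcal{K}^*\phi_i)=\sigma_i\psi_i$ and $(\mathcal{K}\psi_i)=\sigma_i\phi_i$.
   Context: Let $\mathcal{X}\subseteq\mathbb{R}^d$, let $p(\mathbf{x}'|\mathbf{x})$ be the transition density of a time-homogeneous Markov process, and let $\rho_0,\rho_1$ be the distributions of the current and future states. The Koopman operator $\mathcal{K}\colon L^2_{\rho_1}(\mathcal{X})\to L^2_{\rho_0}(\mathcal{X})$ is the integral operator $(\mathcal{K}g)(\mathbf{x})=\int k(\mathbf{x},\mathbf{x}')g(\mathbf{x}')\rho_1(\mathbf{x}')d\mathbf{x}'=\mathbb{E}_{p(\mathbf{x}'|\mathbf{x})}[g(\mathbf{x}')]$ with kernel $k(\mathbf{x},\mathbf{x}')\triangleq p(\mathbf{x}'|\mathbf{x})/\rho_1(\mathbf{x}')$; its adjoint is $(\mathcal{K}^*f)(\mathbf{x}')=\int k(\mathbf{x},\mathbf{x}')f(\mathbf{x})\rho_0(\mathbf{x})d\mathbf{x}$.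 Assume the operator has finite rank with factorized kernel $k(\mathbf{x},\mathbf{x}')=\boldsymbol{\alpha}(\mathbf{x})^\intercal\boldsymbol{\beta}(\mathbf{x}')=\sum_{i=1}^r\alpha_i(\mathbf{x})\beta_i(\mathbf{x}')$, and SVD $k(\mathbf{x},\mathbf{x}')=\sum_{i=1}^r\sigma_i\phi_i(\mathbf{x})\psi_i(\mathbf{x}')$ with $\langle\phi_i,\phi_j\rangle_{\rho_0}=\langle\psi_i,\psi_j\rangle_{\rho_1}=\delta_{ij}$ and $1=\sigma_1\ge\sigma_2\ge\cdots\ge\sigma_r\ge0$. *)

theory Defs
  imports "HOL-Probability.Probability" "Jordan_Normal_Form.Matrix"
begin

definition psd_mat :: "nat \<Rightarrow> real mat \<Rightarrow> bool" where
  "psd_mat n A \<longleftrightarrow> A \<in> carrier_mat n n \<and> transpose_mat A = A \<and>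
     (\<forall>v \<in> carrier_vec n. 0 \<le> v \<bullet> (A *\<^sub>v v))"

definition mat_sqrt :: "real mat \<Rightarrow> real mat" where
  "mat_sqrt A = (THE B. psd_mat (dim_row A) B \<and> B * B = A)"

definition mat_inv :: "real mat \<Rightarrow> real mat" where
  "mat_inv A = (THE B. B \<in> carrier_mat (dim_row A) (dim_row A) \<and> A * B = 1\<^sub>m (dim_row A))"

definition mat_inv_sqrt :: "real mat \<Rightarrow> real mat" where
  "mat_inv_sqrt A = mat_inv (mat_sqrt A)"

definition second_moment :: "'a measure \<Rightarrow> nat \<Rightarrow> ('a \<Rightarrow> real vec) \<Rightarrow> real mat" where
  "second_moment \<rho> r f = mat r r (\<lambda>(i, j). \<integral>x. f x $ i * f x $ j \<partial>\<rho>)"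

definition S_sqrt :: "'a measure \<Rightarrow> 'a measure \<Rightarrow> nat \<Rightarrow> ('a \<Rightarrow> real vec) \<Rightarrow> ('a \<Rightarrow> real vec) \<Rightarrow> real mat" where
  "S_sqrt \<rho>0 \<rho>1 r \<alpha> \<beta> = mat_sqrt (second_moment \<rho>0 r \<alpha>) * mat_sqrt (second_moment \<rho>1 r \<beta>)"

definition koopman :: "'a measure \<Rightarrow> ('a \<Rightarrow> 'a \<Rightarrow> real) \<Rightarrow> ('a \<Rightarrow> real) \<Rightarrow> 'a \<Rightarrow> real" where
  "koopman \<rho>1 k g x = (\<integral>x'. k x x' * g x' \<partial>\<rho>1)"

definition koopman_adj :: "'a measure \<Rightarrow> ('a \<Rightarrow> 'a \<Rightarrow> real) \<Rightarrow> ('a \<Rightarrow> real) \<Rightarrow> 'a \<Rightarrow> real" where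
  "koopman_adj \<rho>0 k f x' = (\<integral>x. k x x' * f x \<partial>\<rho>0)"

end

theory Submission
  imports Defs "Jordan_Normal_Form.Spectral_Radius"
begin


lemma mat_vec_sum:
  assumes "A \<in> carrier_mat n m" "v \<in> carrier_vec m" "i < n"
  shows "vec_index (A *\<^sub>v v) i = (\<Sum>j<m. A $$ (i,j) * vec_index v j)"
  using assms by (auto simp: scalar_prod_def lessThan_atLeast0 intro!: sum.cong)

lemma real_sym_eigen:
  fixes A :: "real mat"
  assumes A: "A \<in> carrier_mat n n" and sym: "transpose_mat A = A" and n: "n > 0"
  shows "\<exists>v e. v \<in> carrier_vec n \<and> v \<noteq> 0\<^sub>v n \<and> A *\<^sub>v v = e \<cdot>\<^sub>v v"
proof -
  define Ac where "Ac = map_mat complex_of_real A"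
  have Ac: "Ac \<in> carrier_mat n n" using A unfolding Ac_def by auto
  from spectrum_non_empty[OF Ac n] obtain l where "l \<in> spectrum Ac" by auto
  then obtain w where ev: "eigenvector Ac w l" unfolding spectrum_def eigenvalue_def by auto
  hence w: "w \<in> carrier_vec n" and w0: "w \<noteq> 0\<^sub>v n" and Aw: "Ac *\<^sub>v w = l \<cdot>\<^sub>v w"
    using Ac unfolding eigenvector_def by auto
  have Asym: "\<And>i j. i < n \<Longrightarrow> j < n \<Longrightarrow> A $$ (i,j) = A $$ (j,i)"
    using sym A by (metis carrier_matD(1) carrier_matD(2) index_transpose_mat(1))
  have eq: "\<And>i. i < n \<Longrightarrow> (\<Sum>j<n. complex_of_real (A $$ (i,j)) * vec_index w j) = l * vec_index w i"
  proof -
    fix i assume i: "i < n"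
    have "vec_index (Ac *\<^sub>v w) i = (\<Sum>j<n. Ac $$ (i,j) * vec_index w j)"
      by (rule mat_vec_sum[OF Ac w i])
    also have "\<dots> = (\<Sum>j<n. complex_of_real (A $$ (i,j)) * vec_index w j)"
      using A i unfolding Ac_def by (auto intro!: sum.cong)
    finally show "?thesis i" using Aw i w by simp
  qed
  define s where "s = (\<Sum>i<n. cnj (vec_index w i) * (\<Sum>j<n. complex_of_real (A $$ (i,j)) * vec_index w j))"
  define t where "t = (\<Sum>i<n. cnj (vec_index w i) * vec_index w i)"
  have st: "s = l * t" unfolding s_def t_def using eq
    by (simp add: sum_distrib_left mult.commute mult.left_commute)
  have "cnj s = (\<Sum>i<n. (vec_index w i) * (\<Sum>j<n. complex_of_real (A $$ (i,j)) * cnj (vec_index w j)))"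
    unfolding s_def by simp
  also have "\<dots> = (\<Sum>i<n. \<Sum>j<n. complex_of_real (A $$ (i,j)) * cnj (vec_index w j) * (vec_index w i))"
    by (simp add: sum_distrib_left mult.commute mult.left_commute)
  also have "\<dots> = (\<Sum>j<n. \<Sum>i<n. complex_of_real (A $$ (i,j)) * cnj (vec_index w j) * (vec_index w i))"
    by (rule sum.swap)
  also have "\<dots> = s" unfolding s_def
    by (auto simp: sum_distrib_left Asym mult.commute mult.left_commute intro!: sum.cong)
  finally have cs: "cnj s = s" .
  have tre: "t = complex_of_real (\<Sum>i<n. (cmod (vec_index w i))\<^sup>2)"
    unfolding t_def of_real_sum by (intro sum.cong) (auto, metis complex_norm_square mult.commute of_real_power)
  obtain i0 where i0: "i0 < n" "vec_index w i0 \<noteq> 0" using w0 w by (metis eq_vecI carrier_vecD index_zero_vec)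
  have "(\<Sum>i<n. (cmod (vec_index w i))\<^sup>2) > 0"
  proof -
    have "(\<Sum>i<n. (cmod (vec_index w i))\<^sup>2) \<ge> (cmod (vec_index w i0))\<^sup>2"
      by (rule member_le_sum) (use i0 in auto)
    moreover have "(cmod (vec_index w i0))\<^sup>2 > 0" using i0 by simp
    ultimately show ?thesis by linarith
  qed
  hence t0: "t \<noteq> 0" unfolding tre of_real_eq_0_iff by linarith
  have cnjt: "cnj t = t" unfolding tre by simp
  have ll: "l = s / t" using st t0 by simp
  have "cnj l = l" unfolding ll using cs cnjt by simp
  hence iml: "Im l = 0" by (metis cnj.simps(2) neg_equal_zero)
  have reeq: "\<And>i. i < n \<Longrightarrow> (\<Sum>j<n. A $$ (i,j) * Re (vec_index w j)) = Re l * Re (vec_index w i)"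
  proof -
    fix i assume i: "i < n"
    have "Re (\<Sum>j<n. complex_of_real (A $$ (i,j)) * vec_index w j) = Re (l * vec_index w i)" using eq[OF i] by simp
    thus "?thesis i" using iml by simp
  qed
  have imeq: "\<And>i. i < n \<Longrightarrow> (\<Sum>j<n. A $$ (i,j) * Im (vec_index w j)) = Re l * Im (vec_index w i)"
  proof -
    fix i assume i: "i < n"
    have "Im (\<Sum>j<n. complex_of_real (A $$ (i,j)) * vec_index w j) = Im (l * vec_index w i)" using eq[OF i] by simp
    thus "?thesis i" using iml by simp
  qed
  show ?thesis
  proof (cases "Re (vec_index w i0) \<noteq> 0")
    case True
    define v where "v = vec n (\<lambda>j. Re (vec_index w j))"
    have "A *\<^sub>v v = Re l \<cdot>\<^sub>v v"
      by (rule eq_vecI) (use A reeq in \<open>auto simp: v_def scalar_prod_def lessThan_atLeast0\<close>)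
    moreover have "v \<noteq> 0\<^sub>v n" using True i0 unfolding v_def by (metis index_vec index_zero_vec(1))
    ultimately show ?thesis by (intro exI[of _ v] exI[of _ "Re l"]) (auto simp: v_def)
  next
    case False
    hence "Im (vec_index w i0) \<noteq> 0" using i0 complex_eqI by force
    define v where "v = vec n (\<lambda>j. Im (vec_index w j))"
    have "A *\<^sub>v v = Re l \<cdot>\<^sub>v v"
      by (rule eq_vecI) (use A imeq in \<open>auto simp: v_def scalar_prod_def lessThan_atLeast0\<close>)
    moreover have "v \<noteq> 0\<^sub>v n" using \<open>Im (vec_index w i0) \<noteq> 0\<close> i0 unfolding v_def by (metis index_vec index_zero_vec(1))
    ultimately show ?thesis by (intro exI[of _ v] exI[of _ "Re l"]) (auto simp: v_def)
  qed
qed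

lemma householder:
  fixes v :: "real vec"
  assumes v: "v \<in> carrier_vec n" and vv: "scalar_prod v v = 1" and n: "0 < n"
  shows "\<exists>H. H \<in> carrier_mat n n \<and> transpose_mat H * H = 1\<^sub>m n \<and> H *\<^sub>v unit_vec n 0 = v"
proof (cases "v = unit_vec n 0")
  case True
  thus ?thesis by (intro exI[of _ "1\<^sub>m n"]) (auto simp: v)
next
  case False
  define u where "u = v - unit_vec n 0"
  have u: "u \<in> carrier_vec n" using v unfolding u_def by auto
  have vsum: "(\<Sum>k<n. vec_index v k * vec_index v k) = 1" using vv v
    by (auto simp: scalar_prod_def lessThan_atLeast0)
  define c where "c = (\<Sum>k<n. vec_index u k * vec_index u k)"
  have uk: "\<And>k. k < n \<Longrightarrow> vec_index u k = vec_index v k - (if k = 0 then 1 else 0)"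
    using v unfolding u_def by auto
  have "c = (\<Sum>k<n. vec_index v k * vec_index v k - 2 * (if k = 0 then vec_index v k else 0) + (if k = 0 then 1 else 0))"
    unfolding c_def by (rule sum.cong) (auto simp: uk algebra_simps)
  also have "\<dots> = 1 - 2 * vec_index v 0 + 1"
    using n by (simp add: sum.distrib sum_subtractf vsum sum_distrib_left[symmetric])
  finally have c: "c = 2 - 2 * vec_index v 0" by simp
  have "u \<noteq> 0\<^sub>v n"
  proof
    assume u0: "u = 0\<^sub>v n"
    have "v = unit_vec n 0"
    proof (rule eq_vecI)
      fix i assume "i < dim_vec (unit_vec n 0)"
      hence i: "i < n" by auto
      from arg_cong[OF u0, of "\<lambda>x. vec_index x i"] show "vec_index v i = vec_index (unit_vec n 0) i"
        using i v unfolding u_def by auto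
    qed (use v in auto)
    with False show False by simp
  qed
  then obtain k0 where k0: "k0 < n" "vec_index u k0 \<noteq> 0" using u by (metis eq_vecI carrier_vecD index_zero_vec)
  have "c \<ge> vec_index u k0 * vec_index u k0" unfolding c_def
    by (rule member_le_sum[where f = "\<lambda>k. vec_index u k * vec_index u k"]) (use k0 in auto)
  moreover have "vec_index u k0 * vec_index u k0 > 0" using k0 by (metis not_real_square_gt_zero)
  ultimately have c0: "c > 0" by linarith
  define a where "a = 2 / c"
  define H where "H = mat n n (\<lambda>(i,j). (if i = j then 1 else 0) - a * vec_index u i * vec_index u j)"
  have H: "H \<in> carrier_mat n n" unfolding H_def by auto
  have ac: "a * a * c = 2 * a" unfolding a_def using c0 by (simp add: field_simps power2_eq_square)
  have "transpose_mat H * H = 1\<^sub>m n"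
  proof (rule eq_matI)
    fix i j assume ij: "i < dim_row (1\<^sub>m n)" "j < dim_col (1\<^sub>m n)"
    hence i: "i < n" and j: "j < n" by auto
    have "(transpose_mat H * H) $$ (i,j) = (\<Sum>k<n. H $$ (k,i) * H $$ (k,j))"
      using H i j by (auto simp: scalar_prod_def lessThan_atLeast0)
    also have "\<dots> = (\<Sum>k<n. (if k = i \<and> k = j then 1 else 0)
        - a * vec_index u i * (if k = i then vec_index u j else 0)
        - a * vec_index u j * (if k = j then vec_index u i else 0)
        + a * a * vec_index u i * vec_index u j * (vec_index u k * vec_index u k))"
      unfolding H_def by (rule sum.cong[OF refl]) (use i j in \<open>auto simp: algebra_simps\<close>)
    also have "\<dots> = (if i = j then 1 else 0) - a * vec_index u i * vec_index u j
        - a * vec_index u j * vec_index u i + a * a * vec_index u i * vec_index u j * c"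
      using i j by (simp add: sum.distrib sum_subtractf sum_distrib_left[symmetric] c_def)
    also have "\<dots> = 1\<^sub>m n $$ (i,j)"
      using i j ac by (simp add: algebra_simps) (metis (no_types, lifting) ac mult.commute mult.left_commute)
    finally show "(transpose_mat H * H) $$ (i,j) = 1\<^sub>m n $$ (i,j)" .
  qed (use H in auto)
  moreover have "H *\<^sub>v unit_vec n 0 = v"
  proof (rule eq_vecI)
    fix i assume "i < dim_vec v"
    hence i: "i < n" using v by auto
    have "vec_index (H *\<^sub>v unit_vec n 0) i = (\<Sum>k<n. H $$ (i,k) * (if k = 0 then 1 else 0))"
      using H i n by (auto simp: scalar_prod_def lessThan_atLeast0 unit_vec_def intro!: sum.cong)
    also have "\<dots> = H $$ (i,0)" using n by (simp add: if_distrib cong: if_cong)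
    also have "\<dots> = (if i = 0 then 1 else 0) - a * vec_index u i * vec_index u 0"
      unfolding H_def using i n by auto
    also have "\<dots> = (if i = 0 then 1 else 0) - (a * vec_index u 0) * vec_index u i" by simp
    also have "a * vec_index u 0 = -1"
      using uk[of 0] n c c0 unfolding a_def by (auto simp: field_simps)
    finally show "vec_index (H *\<^sub>v unit_vec n 0) i = vec_index v i"
      using uk[OF i] by simp
  qed (use H v in auto)
  ultimately show ?thesis using H by blast
qed


lemma real_vec_sq_pos:
  fixes v :: "real vec"
  assumes "v \<in> carrier_vec n" "v \<noteq> 0\<^sub>v n"
  shows "scalar_prod v v > 0"
proof -
  have "conjugate v = v" by (rule eq_vecI) auto
  with conjugate_square_greater_0_vec[OF assms(1)] assms show ?thesis by simp
qed

lemma mat_unit_index: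
  fixes M :: "real mat"
  assumes "M \<in> carrier_mat m n" "i < m" "j < n"
  shows "vec_index (M *\<^sub>v unit_vec n j) i = M $$ (i,j)"
proof -
  have "vec_index (M *\<^sub>v unit_vec n j) i = scalar_prod (row M i) (unit_vec n j)" using assms by auto
  also have "\<dots> = vec_index (row M i) j" using assms(3) by (rule scalar_prod_right_unit)
  finally show ?thesis using assms by auto
qed




lemma spectral:
  fixes A :: "real mat"
  assumes "A \<in> carrier_mat n n" "transpose_mat A = A"
  shows "\<exists>Q. Q \<in> carrier_mat n n \<and> transpose_mat Q * Q = 1\<^sub>m n \<and> Q * transpose_mat Q = 1\<^sub>m n
     \<and> diagonal_mat (transpose_mat Q * A * Q)"
  using assms
proof (induction n arbitrary: A)
  case 0
  thus ?case by (intro exI[of _ "1\<^sub>m 0"]) (auto simp: diagonal_mat_def)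
next
  case (Suc m)
  let ?n = "Suc m"
  have A: "A \<in> carrier_mat ?n ?n" and sym: "transpose_mat A = A" using Suc.prems by auto
  obtain v0 e where v0: "v0 \<in> carrier_vec ?n" "v0 \<noteq> 0\<^sub>v ?n" and Av0: "A *\<^sub>v v0 = e \<cdot>\<^sub>v v0"
    using real_sym_eigen[OF A sym] by auto
  have pos: "scalar_prod v0 v0 > 0" by (rule real_vec_sq_pos[OF v0])
  define v where "v = (1 / sqrt (scalar_prod v0 v0)) \<cdot>\<^sub>v v0"
  have v: "v \<in> carrier_vec ?n" unfolding v_def using v0 by auto
  have vv: "scalar_prod v v = 1" unfolding v_def using v0 pos
    by (simp add: power2_eq_square[symmetric])
  have Av: "A *\<^sub>v v = e \<cdot>\<^sub>v v" unfolding v_def using A v0 Av0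
    by (simp add: mult_mat_vec smult_smult_assoc mult.commute)
  obtain H where H: "H \<in> carrier_mat ?n ?n" and HH: "transpose_mat H * H = 1\<^sub>m ?n"
    and He: "H *\<^sub>v unit_vec ?n 0 = v"
    using householder[OF v vv] by auto
  define A' where "A' = transpose_mat H * A * H"
  have A': "A' \<in> carrier_mat ?n ?n" unfolding A'_def using H A by auto
  have HtA: "transpose_mat H * A \<in> carrier_mat ?n ?n" using H A by auto
  have "transpose_mat A' = transpose_mat H * transpose_mat (transpose_mat H * A)"
    unfolding A'_def using transpose_mult[OF HtA H] .
  also have "transpose_mat (transpose_mat H * A) = transpose_mat A * H"
    using transpose_mult[of "transpose_mat H" ?n ?n A ?n] H A by simp
  also have "transpose_mat H * (transpose_mat A * H) = A'"
    unfolding A'_def sym using H A by (simp add: assoc_mult_mat[of _ ?n ?n _ ?n _ ?n])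
  finally have symA': "transpose_mat A' = A'" .
  have "A' *\<^sub>v unit_vec ?n 0 = transpose_mat H *\<^sub>v (A *\<^sub>v (H *\<^sub>v unit_vec ?n 0))"
    unfolding A'_def using H A
    by (simp add: assoc_mult_mat_vec[of _ ?n ?n _ ?n] assoc_mult_mat_vec[of _ ?n ?n _ ?n])
  also have "\<dots> = e \<cdot>\<^sub>v (transpose_mat H *\<^sub>v (H *\<^sub>v unit_vec ?n 0))"
    unfolding He Av using H v by (simp add: mult_mat_vec)
  also have "transpose_mat H *\<^sub>v (H *\<^sub>v unit_vec ?n 0) = unit_vec ?n 0"
    using H HH by (simp add: assoc_mult_mat_vec[of _ ?n ?n, symmetric])
  finally have A'e: "A' *\<^sub>v unit_vec ?n 0 = e \<cdot>\<^sub>v unit_vec ?n 0" .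
  have col0: "\<And>i. i < ?n \<Longrightarrow> A' $$ (i, 0) = (if i = 0 then e else 0)"
  proof -
    fix i assume i: "i < ?n"
    have "A' $$ (i,0) = vec_index (A' *\<^sub>v unit_vec ?n 0) i" using mat_unit_index[OF A' i] by simp
    also have "\<dots> = (if i = 0 then e else 0)" unfolding A'e using i by simp
    finally show "?thesis i" .
  qed
  have row0: "\<And>j. j < ?n \<Longrightarrow> A' $$ (0, j) = (if j = 0 then e else 0)"
  proof -
    fix j assume j: "j < ?n"
    have "A' $$ (0, j) = transpose_mat A' $$ (j, 0)" using A' j by auto
    thus "?thesis j" using symA' col0[OF j] by simp
  qed
  define A3 where "A3 = mat m m (\<lambda>(i,j). A' $$ (Suc i, Suc j))"
  have A3: "A3 \<in> carrier_mat m m" unfolding A3_def by auto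
  have symA3: "transpose_mat A3 = A3"
  proof (rule eq_matI)
    fix i j assume "i < dim_row A3" "j < dim_col A3"
    hence i: "i < m" and j: "j < m" using A3 by auto
    have "A' $$ (Suc j, Suc i) = transpose_mat A' $$ (Suc i, Suc j)" using A' i j by auto
    thus "transpose_mat A3 $$ (i, j) = A3 $$ (i, j)" using symA' i j unfolding A3_def by auto
  qed (use A3 in auto)
  obtain Q3 where Q3: "Q3 \<in> carrier_mat m m" and Q3Q3: "transpose_mat Q3 * Q3 = 1\<^sub>m m"
    and dQ3: "diagonal_mat (transpose_mat Q3 * A3 * Q3)"
    using Suc.IH[OF A3 symA3] by auto
  define Ae where "Ae = mat 1 1 (\<lambda>_. e)"
  have Ae: "Ae \<in> carrier_mat 1 1" unfolding Ae_def by auto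
  have A'blk: "A' = four_block_mat Ae (0\<^sub>m 1 m) (0\<^sub>m m 1) A3"
  proof (rule eq_matI)
    fix i j assume ij: "i < dim_row (four_block_mat Ae (0\<^sub>m 1 m) (0\<^sub>m m 1) A3)"
      "j < dim_col (four_block_mat Ae (0\<^sub>m 1 m) (0\<^sub>m m 1) A3)"
    hence i: "i < ?n" and j: "j < ?n" using Ae A3 by auto
    show "A' $$ (i, j) = four_block_mat Ae (0\<^sub>m 1 m) (0\<^sub>m m 1) A3 $$ (i, j)"
    proof (cases "i = 0 \<or> j = 0")
      case True
      thus ?thesis using i j col0 row0 Ae A3 by (auto simp: Ae_def)
    next
      case False
      then obtain i' j' where "i = Suc i'" "j = Suc j'" by (metis not0_implies_Suc)
      thus ?thesis using i j Ae A3 by (auto simp: A3_def)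
    qed
  qed (use A' Ae A3 in auto)
  define E where "E = four_block_mat (1\<^sub>m 1) (0\<^sub>m 1 m) (0\<^sub>m m 1) Q3"
  have E: "E \<in> carrier_mat ?n ?n" unfolding E_def using Q3
    using four_block_carrier_mat[of "1\<^sub>m 1" 1 1 Q3 m m] by auto
  have Et: "transpose_mat E = four_block_mat (1\<^sub>m 1) (0\<^sub>m 1 m) (0\<^sub>m m 1) (transpose_mat Q3)"
    unfolding E_def using Q3 by (subst transpose_four_block_mat) auto
  have EE: "transpose_mat E * E = 1\<^sub>m ?n"
    unfolding Et unfolding E_def using Q3 Q3Q3
    by (subst mult_four_block_mat[of _ 1 1 _ m _ m _ _ 1 _ m]) auto
  define Q where "Q = H * E"
  have Q: "Q \<in> carrier_mat ?n ?n" unfolding Q_def using H E by auto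
  have Qt: "transpose_mat Q = transpose_mat E * transpose_mat H" unfolding Q_def
    using H E by (simp add: transpose_mult)
  have QQ: "transpose_mat Q * Q = 1\<^sub>m ?n"
  proof -
    have "transpose_mat Q * Q = transpose_mat E * (transpose_mat H * H) * E"
      unfolding Qt unfolding Q_def using H E
      by (simp add: assoc_mult_mat[of _ ?n ?n _ ?n _ ?n])
    also have "\<dots> = 1\<^sub>m ?n" unfolding HH using E EE by simp
    finally show ?thesis .
  qed
  have QQ': "Q * transpose_mat Q = 1\<^sub>m ?n"
    by (rule mat_mult_left_right_inverse[OF _ Q QQ]) (use Q in auto)
  have "transpose_mat Q * A * Q = transpose_mat E * A' * E"
    unfolding Qt unfolding Q_def A'_def using H E A
    by (simp add: assoc_mult_mat[of _ ?n ?n _ ?n _ ?n])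
  also have "\<dots> = four_block_mat Ae (0\<^sub>m 1 m) (0\<^sub>m m 1) (transpose_mat Q3 * A3 * Q3)"
    unfolding Et A'blk unfolding E_def using Q3 A3 Ae
    by (simp add: mult_four_block_mat[of _ 1 1 _ m _ m _ _ 1 _ m])
  finally have QAQ: "transpose_mat Q * A * Q = four_block_mat Ae (0\<^sub>m 1 m) (0\<^sub>m m 1) (transpose_mat Q3 * A3 * Q3)" .
  have "diagonal_mat (transpose_mat Q * A * Q)"
    unfolding QAQ diagonal_mat_def
  proof (intro allI impI)
    fix i j assume ij: "i < dim_row (four_block_mat Ae (0\<^sub>m 1 m) (0\<^sub>m m 1) (transpose_mat Q3 * A3 * Q3))"
      "j < dim_col (four_block_mat Ae (0\<^sub>m 1 m) (0\<^sub>m m 1) (transpose_mat Q3 * A3 * Q3))" "i \<noteq> j"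
    hence i: "i < ?n" and j: "j < ?n" using Ae Q3 A3 by auto
    show "four_block_mat Ae (0\<^sub>m 1 m) (0\<^sub>m m 1) (transpose_mat Q3 * A3 * Q3) $$ (i, j) = 0"
    proof (cases "i = 0 \<or> j = 0")
      case True
      thus ?thesis using i j ij(3) Ae A3 Q3 by (auto simp: Ae_def)
    next
      case False
      then obtain i' j' where ij': "i = Suc i'" "j = Suc j'" by (metis not0_implies_Suc)
      have "(transpose_mat Q3 * A3 * Q3) $$ (i', j') = 0"
        using dQ3 ij' i j ij(3) Q3 A3 unfolding diagonal_mat_def by auto
      thus ?thesis using ij' i j Ae A3 Q3 by auto
    qed
  qed
  thus ?case using Q QQ QQ' by blast
qed




lemma diag_unit:
  fixes L :: "real mat"
  assumes L: "L \<in> carrier_mat n n" and dL: "diagonal_mat L" and i: "i < n"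
  shows "L *\<^sub>v unit_vec n i = L $$ (i,i) \<cdot>\<^sub>v unit_vec n i"
proof (rule eq_vecI)
  fix k assume "k < dim_vec (L $$ (i,i) \<cdot>\<^sub>v unit_vec n i)"
  hence k: "k < n" by auto
  show "vec_index (L *\<^sub>v unit_vec n i) k = vec_index (L $$ (i,i) \<cdot>\<^sub>v unit_vec n i) k"
    using mat_unit_index[OF L k i] dL L k i unfolding diagonal_mat_def by auto
qed (use L in auto)

lemma diag_is_mat_diag:
  fixes L :: "real mat"
  assumes L: "L \<in> carrier_mat n n" and dL: "diagonal_mat L"
  shows "L = mat_diag n (\<lambda>i. L $$ (i,i))"
  by (rule eq_matI) (use L dL in \<open>auto simp: mat_diag_def diagonal_mat_def\<close>)

lemma quad_transpose:
  fixes Q :: "real mat"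
  assumes "Q \<in> carrier_mat n n" "x \<in> carrier_vec n" "y \<in> carrier_vec n"
  shows "scalar_prod x (Q *\<^sub>v y) = scalar_prod (transpose_mat Q *\<^sub>v x) y"
  using transpose_vec_mult_scalar[OF assms(1) assms(3) assms(2)] by simp

lemma psd_sqrt_exists:
  fixes M :: "real mat"
  assumes psd: "psd_mat n M"
  shows "\<exists>B. psd_mat n B \<and> B * B = M"
proof -
  have M: "M \<in> carrier_mat n n" and symM: "transpose_mat M = M"
    and pos: "\<And>v. v \<in> carrier_vec n \<Longrightarrow> 0 \<le> scalar_prod v (M *\<^sub>v v)"
    using psd unfolding psd_mat_def by auto
  obtain Q where Q: "Q \<in> carrier_mat n n" and QQ: "transpose_mat Q * Q = 1\<^sub>m n"
    and QQ': "Q * transpose_mat Q = 1\<^sub>m n" and dD: "diagonal_mat (transpose_mat Q * M * Q)"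
    using spectral[OF M symM] by auto
  define D where "D = transpose_mat Q * M * Q"
  have D: "D \<in> carrier_mat n n" unfolding D_def using Q M by auto
  define d where "d = (\<lambda>i. D $$ (i,i))"
  have d0: "\<And>i. i < n \<Longrightarrow> d i \<ge> 0"
  proof -
    fix i assume i: "i < n"
    let ?q = "Q *\<^sub>v unit_vec n i"
    have q: "?q \<in> carrier_vec n" using Q by auto
    have "d i = vec_index (D *\<^sub>v unit_vec n i) i" unfolding d_def using mat_unit_index[OF D i i] by simp
    also have "\<dots> = scalar_prod (unit_vec n i) (D *\<^sub>v unit_vec n i)"
      using D i by (subst scalar_prod_left_unit) auto
    also have "D *\<^sub>v unit_vec n i = transpose_mat Q *\<^sub>v (M *\<^sub>v ?q)"
      unfolding D_def using Q M by (simp add: assoc_mult_mat_vec[of _ n n _ n])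
    also have "scalar_prod (unit_vec n i) (transpose_mat Q *\<^sub>v (M *\<^sub>v ?q)) = scalar_prod ?q (M *\<^sub>v ?q)"
      using quad_transpose[of "transpose_mat Q" n "unit_vec n i" "M *\<^sub>v ?q"] Q M by simp
    finally show "d i \<ge> 0" using pos[OF q] by simp
  qed
  define S where "S = mat_diag n (\<lambda>i. sqrt (d i))"
  have S: "S \<in> carrier_mat n n" unfolding S_def by auto
  have "S * S = mat_diag n (\<lambda>i. sqrt (d i) * sqrt (d i))" unfolding S_def by simp
  also have "\<dots> = mat_diag n d" using d0 by (intro eq_matI) (auto simp: mat_diag_def)
  also have "\<dots> = D" using diag_is_mat_diag[OF D dD[folded D_def]] unfolding d_def by simp
  finally have SS: "S * S = D" .
  have MD: "M = Q * D * transpose_mat Q"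
  proof -
    have "Q * D * transpose_mat Q = (Q * transpose_mat Q) * M * (Q * transpose_mat Q)"
      unfolding D_def using Q M by (simp add: assoc_mult_mat[of _ n n _ n _ n])
    thus ?thesis unfolding QQ' using M by simp
  qed
  define B where "B = Q * S * transpose_mat Q"
  have B: "B \<in> carrier_mat n n" unfolding B_def using Q S by auto
  have St: "transpose_mat S = S" unfolding S_def by (rule eq_matI) (auto simp: mat_diag_def)
  have symB: "transpose_mat B = B" unfolding B_def using Q S St
    by (simp add: transpose_mult[of _ n n _ n] assoc_mult_mat[of _ n n _ n _ n])
  have BB: "B * B = M"
  proof -
    have "B * B = Q * S * (transpose_mat Q * Q) * S * transpose_mat Q"
      unfolding B_def using Q S by (simp add: assoc_mult_mat[of _ n n _ n _ n])
    also have "\<dots> = Q * (S * S) * transpose_mat Q" unfolding QQ using Q S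
      by (simp add: assoc_mult_mat[of _ n n _ n _ n])
    finally show ?thesis unfolding SS MD .
  qed
  have posB: "\<And>v. v \<in> carrier_vec n \<Longrightarrow> 0 \<le> scalar_prod v (B *\<^sub>v v)"
  proof -
    fix v :: "real vec" assume v: "v \<in> carrier_vec n"
    define w where "w = transpose_mat Q *\<^sub>v v"
    have w: "w \<in> carrier_vec n" unfolding w_def using Q v by auto
    have "B *\<^sub>v v = Q *\<^sub>v (S *\<^sub>v w)" unfolding B_def w_def using Q S v
      by (simp add: assoc_mult_mat_vec[of _ n n _ n])
    hence "scalar_prod v (B *\<^sub>v v) = scalar_prod w (S *\<^sub>v w)"
      using quad_transpose[OF Q v, of "S *\<^sub>v w"] S w unfolding w_def by simp
    also have "S *\<^sub>v w = vec n (\<lambda>i. sqrt (d i) * vec_index w i)"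
    proof (rule eq_vecI)
      fix i assume "i < dim_vec (vec n (\<lambda>i. sqrt (d i) * vec_index w i))"
      hence i: "i < n" by simp
      have "vec_index (S *\<^sub>v w) i = (\<Sum>j<n. S $$ (i,j) * vec_index w j)" by (rule mat_vec_sum[OF S w i])
      also have "\<dots> = (\<Sum>j<n. if j = i then sqrt (d i) * vec_index w i else 0)"
        using i by (intro sum.cong) (auto simp: S_def mat_diag_def)
      also have "\<dots> = sqrt (d i) * vec_index w i" using i by simp
      finally show "vec_index (S *\<^sub>v w) i = vec_index (vec n (\<lambda>i. sqrt (d i) * vec_index w i)) i" using i by simp
    qed (use S in auto)
    also have "scalar_prod w (vec n (\<lambda>i. sqrt (d i) * vec_index w i)) = (\<Sum>i<n. vec_index w i * (sqrt (d i) * vec_index w i))"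
      using w by (auto simp: scalar_prod_def lessThan_atLeast0)
    also have "\<dots> \<ge> 0" using d0 by (intro sum_nonneg) (metis lessThan_iff mult.left_commute mult_nonneg_nonneg real_sqrt_ge_zero zero_le_square)
    finally show "0 \<le> scalar_prod v (B *\<^sub>v v)" .
  qed
  show ?thesis using B symB BB posB unfolding psd_mat_def by blast
qed




lemma mat_mult_zero_vec:
  fixes A :: "real mat"
  shows "A \<in> carrier_mat m n \<Longrightarrow> A *\<^sub>v 0\<^sub>v n = 0\<^sub>v m"
  by (rule eq_vecI) (auto simp: scalar_prod_def)

lemma zero_mat_mult_vec:
  fixes v :: "real vec"
  shows "v \<in> carrier_vec n \<Longrightarrow> 0\<^sub>m m n *\<^sub>v v = 0\<^sub>v m"
  by (rule eq_vecI) (auto simp: scalar_prod_def)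

lemma psd_zero:
  fixes B :: "real mat"
  assumes psd: "psd_mat n B" and q: "q \<in> carrier_vec n" and z: "scalar_prod q (B *\<^sub>v q) = 0"
  shows "B *\<^sub>v q = 0\<^sub>v n"
proof -
  obtain R where R: "psd_mat n R" and RR: "R * R = B" using psd_sqrt_exists[OF psd] by auto
  have Rc: "R \<in> carrier_mat n n" and Rs: "transpose_mat R = R" using R unfolding psd_mat_def by auto
  have "scalar_prod q (B *\<^sub>v q) = scalar_prod (R *\<^sub>v q) (R *\<^sub>v q)"
    unfolding RR[symmetric] using Rc q quad_transpose[OF Rc q, of "R *\<^sub>v q"] Rs
    by (simp add: assoc_mult_mat_vec[of _ n n _ n])
  hence "R *\<^sub>v q = 0\<^sub>v n" using z real_vec_sq_pos[of "R *\<^sub>v q" n] Rc q by fastforce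
  hence "R *\<^sub>v (R *\<^sub>v q) = 0\<^sub>v n" using Rc by (simp add: mat_mult_zero_vec)
  thus ?thesis unfolding RR[symmetric] using Rc q by (simp add: assoc_mult_mat_vec[of _ n n _ n])
qed

lemma psd_sqrt_unique:
  fixes B1 B2 M :: "real mat"
  assumes P1: "psd_mat n B1" and P2: "psd_mat n B2" and E1: "B1 * B1 = M" and E2: "B2 * B2 = M"
    and inj: "\<And>x. x \<in> carrier_vec n \<Longrightarrow> M *\<^sub>v x = 0\<^sub>v n \<Longrightarrow> x = 0\<^sub>v n"
  shows "B1 = B2"
proof -
  have B1: "B1 \<in> carrier_mat n n" and s1: "transpose_mat B1 = B1"
    and p1: "\<And>v. v \<in> carrier_vec n \<Longrightarrow> 0 \<le> scalar_prod v (B1 *\<^sub>v v)"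
    using P1 unfolding psd_mat_def by auto
  have B2: "B2 \<in> carrier_mat n n" and s2: "transpose_mat B2 = B2"
    and p2: "\<And>v. v \<in> carrier_vec n \<Longrightarrow> 0 \<le> scalar_prod v (B2 *\<^sub>v v)"
    using P2 unfolding psd_mat_def by auto
  define D where "D = B1 - B2"
  have D: "D \<in> carrier_mat n n" unfolding D_def using B1 B2 by auto
  have sD: "transpose_mat D = D" unfolding D_def using B1 B2 s1 s2 by (simp add: transpose_minus)
  have key: "B1 * D + D * B2 = 0\<^sub>m n n"
  proof -
    have "B1 * D + D * B2 = (B1 * B1 - B1 * B2) + (B1 * B2 - B2 * B2)"
      unfolding D_def using B1 B2 by (simp add: mult_minus_distrib_mat minus_mult_distrib_mat)
    also have "\<dots> = 0\<^sub>m n n" using B1 B2 E1 E2 by (intro eq_matI) auto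
    finally show ?thesis .
  qed
  obtain Q where Q: "Q \<in> carrier_mat n n" and QQ: "transpose_mat Q * Q = 1\<^sub>m n"
    and QQ': "Q * transpose_mat Q = 1\<^sub>m n" and dL: "diagonal_mat (transpose_mat Q * D * Q)"
    using spectral[OF D sD] by auto
  define L where "L = transpose_mat Q * D * Q"
  have L: "L \<in> carrier_mat n n" unfolding L_def using Q D by auto
  have DQ: "D * Q = Q * L"
  proof -
    have "Q * L = (Q * transpose_mat Q) * D * Q" unfolding L_def using Q D
      by (simp add: assoc_mult_mat[of _ n n _ n _ n])
    thus ?thesis unfolding QQ' using D Q by simp
  qed
  have L0: "\<And>i. i < n \<Longrightarrow> L $$ (i,i) = 0"
  proof (rule ccontr)
    fix i assume i: "i < n" and ne: "L $$ (i,i) \<noteq> 0"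
    let ?l = "L $$ (i,i)"
    define q where "q = Q *\<^sub>v unit_vec n i"
    have q: "q \<in> carrier_vec n" unfolding q_def using Q by auto
    have Dq: "D *\<^sub>v q = ?l \<cdot>\<^sub>v q"
    proof -
      have "D *\<^sub>v q = (Q * L) *\<^sub>v unit_vec n i" unfolding q_def DQ[symmetric] using D Q
        by (simp add: assoc_mult_mat_vec[of _ n n _ n])
      also have "\<dots> = Q *\<^sub>v (L *\<^sub>v unit_vec n i)" using Q L by (simp add: assoc_mult_mat_vec[of _ n n _ n])
      also have "L *\<^sub>v unit_vec n i = ?l \<cdot>\<^sub>v unit_vec n i" by (rule diag_unit[OF L dL[folded L_def] i])
      also have "Q *\<^sub>v (?l \<cdot>\<^sub>v unit_vec n i) = ?l \<cdot>\<^sub>v q" unfolding q_def using Q by (simp add: mult_mat_vec)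
      finally show ?thesis .
    qed
    have "0 = scalar_prod q ((B1 * D + D * B2) *\<^sub>v q)" unfolding key using q by (simp add: zero_mat_mult_vec)
    also have "(B1 * D + D * B2) *\<^sub>v q = B1 *\<^sub>v (D *\<^sub>v q) + D *\<^sub>v (B2 *\<^sub>v q)"
      using B1 B2 D q by (simp add: add_mult_distrib_mat_vec[of _ n n _ q] assoc_mult_mat_vec[of _ n n _ n])
    also have "scalar_prod q (B1 *\<^sub>v (D *\<^sub>v q) + D *\<^sub>v (B2 *\<^sub>v q))
       = scalar_prod q (B1 *\<^sub>v (D *\<^sub>v q)) + scalar_prod q (D *\<^sub>v (B2 *\<^sub>v q))"
      using B1 B2 D q by (simp add: scalar_prod_add_distrib[of _ n])
    also have "scalar_prod q (D *\<^sub>v (B2 *\<^sub>v q)) = scalar_prod (D *\<^sub>v q) (B2 *\<^sub>v q)"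
      using quad_transpose[OF D q, of "B2 *\<^sub>v q"] B2 q sD by simp
    also have "scalar_prod (D *\<^sub>v q) (B2 *\<^sub>v q) = ?l * scalar_prod q (B2 *\<^sub>v q)"
      unfolding Dq using q B2 by simp
    also have "scalar_prod q (B1 *\<^sub>v (D *\<^sub>v q)) = ?l * scalar_prod q (B1 *\<^sub>v q)"
      unfolding Dq using q B1 by (simp add: mult_mat_vec)
    finally have "?l * (scalar_prod q (B1 *\<^sub>v q) + scalar_prod q (B2 *\<^sub>v q)) = 0" by (simp add: algebra_simps)
    hence "scalar_prod q (B1 *\<^sub>v q) + scalar_prod q (B2 *\<^sub>v q) = 0" using ne by simp
    hence "scalar_prod q (B1 *\<^sub>v q) = 0" using p1[OF q] p2[OF q] by linarith
    hence "B1 *\<^sub>v q = 0\<^sub>v n" by (rule psd_zero[OF P1 q])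
    hence "M *\<^sub>v q = 0\<^sub>v n" unfolding E1[symmetric] using B1 q by (simp add: assoc_mult_mat_vec[of _ n n _ n] mat_mult_zero_vec)
    hence "q = 0\<^sub>v n" using inj q by simp
    moreover have "scalar_prod q q = 1"
    proof -
      have "scalar_prod q q = scalar_prod (unit_vec n i) ((transpose_mat Q * Q) *\<^sub>v unit_vec n i)"
        unfolding q_def using quad_transpose[OF Q, of "Q *\<^sub>v unit_vec n i" "unit_vec n i"] Q
        by (simp add: assoc_mult_mat_vec[of _ n n _ n] comm_scalar_prod[of _ n])
      thus ?thesis unfolding QQ using i by simp
    qed
    ultimately show False by simp
  qed
  have "L = 0\<^sub>m n n" using L dL[folded L_def] L0 unfolding diagonal_mat_def
    by (intro eq_matI) auto
  hence "D = 0\<^sub>m n n"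
  proof -
    assume L0: "L = 0\<^sub>m n n"
    have "D = (D * Q) * transpose_mat Q" using D Q QQ' by (simp add: assoc_mult_mat[of _ n n _ n _ n])
    also have "\<dots> = 0\<^sub>m n n" unfolding DQ L0 using Q by simp
    finally show ?thesis .
  qed
  show ?thesis
  proof (rule eq_matI)
    fix i j assume "i < dim_row B2" "j < dim_col B2"
    hence i: "i < n" and j: "j < n" using B2 by auto
    from arg_cong[OF \<open>D = 0\<^sub>m n n\<close>, of "\<lambda>X. X $$ (i,j)"] show "B1 $$ (i,j) = B2 $$ (i,j)"
      unfolding D_def using B1 B2 i j by auto
  qed (use B1 B2 in auto)
qed




lemma mat_sqrt_props:
  fixes M Mi :: "real mat"
  assumes psd: "psd_mat n M" and Mi: "Mi \<in> carrier_mat n n" and MMi: "Mi * M = 1\<^sub>m n"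
  shows "psd_mat n (mat_sqrt M) \<and> mat_sqrt M * mat_sqrt M = M"
proof -
  have M: "M \<in> carrier_mat n n" using psd unfolding psd_mat_def by auto
  have inj: "\<And>x. x \<in> carrier_vec n \<Longrightarrow> M *\<^sub>v x = 0\<^sub>v n \<Longrightarrow> x = 0\<^sub>v n"
  proof -
    fix x :: "real vec" assume x: "x \<in> carrier_vec n" and z: "M *\<^sub>v x = 0\<^sub>v n"
    have "x = (Mi * M) *\<^sub>v x" unfolding MMi using x by simp
    also have "\<dots> = Mi *\<^sub>v (M *\<^sub>v x)" using Mi M x by (simp add: assoc_mult_mat_vec[of _ n n _ n])
    finally show "x = 0\<^sub>v n" unfolding z using Mi by (simp add: mat_mult_zero_vec)
  qed
  have ex: "\<exists>!B. psd_mat (dim_row M) B \<and> B * B = M"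
    using psd_sqrt_exists[OF psd] psd_sqrt_unique[OF _ _ _ _ inj] M by auto
  show ?thesis using theI'[OF ex] M unfolding mat_sqrt_def by auto
qed

lemma mat_inv_eq:
  fixes R Z :: "real mat"
  assumes R: "R \<in> carrier_mat n n" and Z: "Z \<in> carrier_mat n n" and RZ: "R * Z = 1\<^sub>m n"
  shows "mat_inv R = Z"
proof -
  have ZR: "Z * R = 1\<^sub>m n" by (rule mat_mult_left_right_inverse[OF R Z RZ])
  have "\<exists>!B. B \<in> carrier_mat (dim_row R) (dim_row R) \<and> R * B = 1\<^sub>m (dim_row R)"
  proof (rule ex1I[of _ Z])
    fix B assume B: "B \<in> carrier_mat (dim_row R) (dim_row R) \<and> R * B = 1\<^sub>m (dim_row R)"
    hence Bc: "B \<in> carrier_mat n n" and RB: "R * B = 1\<^sub>m n" using R by auto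
    have "B = (Z * R) * B" unfolding ZR using Bc by simp
    also have "\<dots> = Z * (R * B)" using Z R Bc by (simp add: assoc_mult_mat[of _ n n _ n _ n])
    finally show "B = Z" unfolding RB using Z by simp
  qed (use R Z RZ in auto)
  from theI'[OF this] have "mat_inv R \<in> carrier_mat n n \<and> R * mat_inv R = 1\<^sub>m n"
    unfolding mat_inv_def using R by auto
  moreover have "\<And>B. B \<in> carrier_mat n n \<Longrightarrow> R * B = 1\<^sub>m n \<Longrightarrow> B = Z"
  proof -
    fix B assume Bc: "B \<in> carrier_mat n n" and RB: "R * B = 1\<^sub>m n"
    have "B = (Z * R) * B" unfolding ZR using Bc by simp
    also have "\<dots> = Z * (R * B)" using Z R Bc by (simp add: assoc_mult_mat[of _ n n _ n _ n])
    finally show "B = Z" unfolding RB using Z by simp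
  qed
  ultimately show ?thesis by blast
qed




definition cm :: "'a measure \<Rightarrow> nat \<Rightarrow> ('a \<Rightarrow> real vec) \<Rightarrow> ('a \<Rightarrow> real vec) \<Rightarrow> real mat" where
  "cm \<rho> r f g = mat r r (\<lambda>(i, j). \<integral>x. vec_index (f x) i * vec_index (g x) j \<partial>\<rho>)"

lemma cm_carrier[simp]: "cm \<rho> r f g \<in> carrier_mat r r" unfolding cm_def by auto
lemma cm_dim[simp]: "dim_row (cm \<rho> r f g) = r" "dim_col (cm \<rho> r f g) = r" unfolding cm_def by auto

lemma second_moment_cm: "second_moment \<rho> r f = cm \<rho> r f f"
  unfolding second_moment_def cm_def by simp

lemma prod_bound_sq:
  fixes a b :: real
  shows "\<bar>a * b\<bar> \<le> \<bar>a\<^sup>2 + b\<^sup>2\<bar>"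
proof -
  have h: "0 \<le> (\<bar>a\<bar> - \<bar>b\<bar>)\<^sup>2" by simp
  have e: "(\<bar>a\<bar> - \<bar>b\<bar>)\<^sup>2 = a\<^sup>2 + b\<^sup>2 - 2 * (\<bar>a\<bar> * \<bar>b\<bar>)"
    by (simp add: power2_eq_square algebra_simps)
  have p: "0 \<le> \<bar>a\<bar> * \<bar>b\<bar>" by simp
  have "\<bar>a * b\<bar> = \<bar>a\<bar> * \<bar>b\<bar>" by (simp add: abs_mult)
  moreover have "0 \<le> a\<^sup>2 + b\<^sup>2" by simp
  ultimately show ?thesis using h e p by linarith
qed

lemma integrable_prod_L2:
  fixes f g :: "'a \<Rightarrow> real"
  assumes "f \<in> borel_measurable M" "g \<in> borel_measurable M"
    "integrable M (\<lambda>x. (f x)\<^sup>2)" "integrable M (\<lambda>x. (g x)\<^sup>2)"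
  shows "integrable M (\<lambda>x. f x * g x)"
proof (rule Bochner_Integration.integrable_bound[where f="\<lambda>x. (f x)\<^sup>2 + (g x)\<^sup>2"])
  show "integrable M (\<lambda>x. (f x)\<^sup>2 + (g x)\<^sup>2)" by (intro Bochner_Integration.integrable_add assms)
  show "(\<lambda>x. f x * g x) \<in> borel_measurable M" by (intro borel_measurable_times assms)
  show "AE x in M. norm (f x * g x) \<le> norm ((f x)\<^sup>2 + (g x)\<^sup>2)"
    by (rule AE_I2) (simp only: real_norm_def prod_bound_sq)
qed

lemma int_lin:
  fixes f :: "nat \<Rightarrow> 'a \<Rightarrow> real"
  assumes "\<And>j. j < r \<Longrightarrow> integrable M (f j)"
  shows "(\<integral>x. (\<Sum>j<r. c j * f j x) \<partial>M) = (\<Sum>j<r. c j * (\<integral>x. f j x \<partial>M))"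
  using Bochner_Integration.integral_sum[of "{..<r}" M "\<lambda>j x. c j * f j x"] assms by auto

lemma cm_left:
  assumes fg: "\<And>x. x \<in> space \<rho> \<Longrightarrow> f x = N *\<^sub>v g x" and N: "N \<in> carrier_mat r r"
    and g: "\<And>x. x \<in> space \<rho> \<Longrightarrow> g x \<in> carrier_vec r"
    and int: "\<And>k j. k < r \<Longrightarrow> j < r \<Longrightarrow> integrable \<rho> (\<lambda>x. vec_index (g x) k * vec_index (h x) j)"
  shows "cm \<rho> r f h = N * cm \<rho> r g h"
proof (rule eq_matI)
  fix i j assume "i < dim_row (N * cm \<rho> r g h)" "j < dim_col (N * cm \<rho> r g h)"
  hence i: "i < r" and j: "j < r" using N by auto
  have "cm \<rho> r f h $$ (i,j) = (\<integral>x. vec_index (f x) i * vec_index (h x) j \<partial>\<rho>)"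
    unfolding cm_def using i j by simp
  also have "\<dots> = (\<integral>x. (\<Sum>k<r. N $$ (i,k) * (vec_index (g x) k * vec_index (h x) j)) \<partial>\<rho>)"
    by (rule Bochner_Integration.integral_cong[OF refl]) (simp add: fg mat_vec_sum[OF N g i] sum_distrib_right mult.assoc)
  also have "\<dots> = (\<Sum>k<r. N $$ (i,k) * cm \<rho> r g h $$ (k,j))"
    using int j by (subst int_lin) (auto simp: cm_def)
  also have "\<dots> = (N * cm \<rho> r g h) $$ (i,j)"
    using N i j by (auto simp: scalar_prod_def lessThan_atLeast0)
  finally show "cm \<rho> r f h $$ (i,j) = (N * cm \<rho> r g h) $$ (i,j)" .
qed (use N in auto)

lemma cm_right:
  assumes fg: "\<And>x. x \<in> space \<rho> \<Longrightarrow> h x = N *\<^sub>v g x" and N: "N \<in> carrier_mat r r"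
    and g: "\<And>x. x \<in> space \<rho> \<Longrightarrow> g x \<in> carrier_vec r"
    and int: "\<And>k j. k < r \<Longrightarrow> j < r \<Longrightarrow> integrable \<rho> (\<lambda>x. vec_index (f x) k * vec_index (g x) j)"
  shows "cm \<rho> r f h = cm \<rho> r f g * transpose_mat N"
proof (rule eq_matI)
  fix i j assume "i < dim_row (cm \<rho> r f g * transpose_mat N)" "j < dim_col (cm \<rho> r f g * transpose_mat N)"
  hence i: "i < r" and j: "j < r" using N by auto
  have "cm \<rho> r f h $$ (i,j) = (\<integral>x. vec_index (f x) i * vec_index (h x) j \<partial>\<rho>)"
    unfolding cm_def using i j by simp
  also have "\<dots> = (\<integral>x. (\<Sum>k<r. N $$ (j,k) * (vec_index (f x) i * vec_index (g x) k)) \<partial>\<rho>)"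
    by (rule Bochner_Integration.integral_cong[OF refl]) (simp add: fg mat_vec_sum[OF N g j] sum_distrib_left mult.assoc mult.left_commute)
  also have "\<dots> = (\<Sum>k<r. N $$ (j,k) * cm \<rho> r f g $$ (i,k))"
    using int i by (subst int_lin) (auto simp: cm_def)
  also have "\<dots> = (cm \<rho> r f g * transpose_mat N) $$ (i,j)"
    using N i j by (auto simp: scalar_prod_def lessThan_atLeast0 mult.commute intro!: sum.cong)
  finally show "cm \<rho> r f h $$ (i,j) = (cm \<rho> r f g * transpose_mat N) $$ (i,j)" .
qed (use N in auto)

lemma proj_lemma:
  assumes eq: "\<And>y. y \<in> space \<rho> \<Longrightarrow> scalar_prod (b y) av = (\<Sum>i<r. c i * vec_index (p y) i)"
    and b: "\<And>y. y \<in> space \<rho> \<Longrightarrow> b y \<in> carrier_vec r" and av: "av \<in> carrier_vec r"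
    and ibb: "\<And>m j. m < r \<Longrightarrow> j < r \<Longrightarrow> integrable \<rho> (\<lambda>y. vec_index (b y) m * vec_index (b y) j)"
    and ibp: "\<And>m j. m < r \<Longrightarrow> j < r \<Longrightarrow> integrable \<rho> (\<lambda>y. vec_index (b y) m * vec_index (p y) j)"
  shows "cm \<rho> r b b *\<^sub>v av = cm \<rho> r b p *\<^sub>v vec r c"
proof (rule eq_vecI)
  fix m assume "m < dim_vec (cm \<rho> r b p *\<^sub>v vec r c)"
  hence m: "m < r" by simp
  have "vec_index (cm \<rho> r b b *\<^sub>v av) m = (\<Sum>j<r. cm \<rho> r b b $$ (m,j) * vec_index av j)"
    by (rule mat_vec_sum[OF cm_carrier av m])
  also have "\<dots> = (\<Sum>j<r. vec_index av j * (\<integral>y. vec_index (b y) m * vec_index (b y) j \<partial>\<rho>))"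
    using m by (auto simp: cm_def mult.commute intro!: sum.cong)
  also have "\<dots> = (\<integral>y. (\<Sum>j<r. vec_index av j * (vec_index (b y) m * vec_index (b y) j)) \<partial>\<rho>)"
    using ibb m by (subst int_lin) auto
  also have "\<dots> = (\<integral>y. vec_index (b y) m * scalar_prod (b y) av \<partial>\<rho>)"
    by (rule Bochner_Integration.integral_cong[OF refl])
      (use b av in \<open>auto simp: scalar_prod_def lessThan_atLeast0 sum_distrib_left mult.commute mult.left_commute intro!: sum.cong\<close>)
  also have "\<dots> = (\<integral>y. (\<Sum>i<r. c i * (vec_index (b y) m * vec_index (p y) i)) \<partial>\<rho>)"
    by (rule Bochner_Integration.integral_cong[OF refl]) (simp add: eq sum_distrib_left mult.commute mult.left_commute)
  also have "\<dots> = (\<Sum>i<r. c i * cm \<rho> r b p $$ (m,i))"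
    using ibp m by (subst int_lin) (auto simp: cm_def)
  also have "\<dots> = vec_index (cm \<rho> r b p *\<^sub>v vec r c) m"
    using m by (subst mat_vec_sum[OF cm_carrier _ m]) (auto simp: mult.commute intro!: sum.cong)
  finally show "vec_index (cm \<rho> r b b *\<^sub>v av) m = vec_index (cm \<rho> r b p *\<^sub>v vec r c) m" .
qed auto




lemma mat_diag_mult_vec:
  fixes v :: "real vec"
  assumes v: "v \<in> carrier_vec n"
  shows "mat_diag n f *\<^sub>v v = vec n (\<lambda>i. f i * vec_index v i)"
proof (rule eq_vecI)
  fix i assume "i < dim_vec (vec n (\<lambda>i. f i * vec_index v i))"
  hence i: "i < n" by simp
  have "vec_index (mat_diag n f *\<^sub>v v) i = (\<Sum>j<n. mat_diag n f $$ (i,j) * vec_index v j)"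
    by (rule mat_vec_sum[OF mat_diag_dim v i])
  also have "\<dots> = (\<Sum>j<n. if j = i then f i * vec_index v i else 0)"
    using i by (intro sum.cong) (auto simp: mat_diag_def)
  also have "\<dots> = f i * vec_index v i" using i by simp
  finally show "vec_index (mat_diag n f *\<^sub>v v) i = vec_index (vec n (\<lambda>i. f i * vec_index v i)) i" using i by simp
qed (auto simp: mat_diag_def)

lemma mat_diag_transpose: "transpose_mat (mat_diag n f) = mat_diag n f"
  by (rule eq_matI) (auto simp: mat_diag_def)

lemma invertible_obtain:
  fixes A :: "real mat"
  assumes "invertible_mat A" "A \<in> carrier_mat n n"
  shows "\<exists>B. B \<in> carrier_mat n n \<and> A * B = 1\<^sub>m n \<and> B * A = 1\<^sub>m n"
proof -
  obtain B where AB: "A * B = 1\<^sub>m (dim_row A)" and BA: "B * A = 1\<^sub>m (dim_row B)"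
    using assms(1) unfolding invertible_mat_def inverts_mat_def by auto
  have "dim_col B = n" using arg_cong[OF AB, of dim_col] assms(2) by auto
  moreover have "dim_row B = n" using arg_cong[OF BA, of dim_col] assms(2) by auto
  ultimately show ?thesis using AB BA assms(2) by (intro exI[of _ B]) auto
qed

lemma cm_cong:
  assumes "\<And>x. x \<in> space \<rho> \<Longrightarrow> f x = f' x" "\<And>x. x \<in> space \<rho> \<Longrightarrow> g x = g' x"
  shows "cm \<rho> r f g = cm \<rho> r f' g'"
  unfolding cm_def by (rule eq_matI) (auto intro!: Bochner_Integration.integral_cong simp: assms)

lemma sum_delta_mult:
  fixes c :: "nat \<Rightarrow> real"
  assumes "i < r"
  shows "(\<Sum>j<r. c j * (if j = i then 1 else 0)) = c i"
  using assms by (simp add: if_distrib cong: if_cong)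

lemma sq_nonneg_vec:
  fixes v :: "real vec"
  shows "0 \<le> scalar_prod v v"
  unfolding scalar_prod_def by (intro sum_nonneg) auto




theorem theoremC1:
  fixes \<rho>0 \<rho>1 :: "(real ^ 'd) measure"
    and X :: "(real ^ 'd) set"
    and k :: "real ^ 'd \<Rightarrow> real ^ 'd \<Rightarrow> real"
    and r :: nat
    and \<alpha> \<beta> :: "real ^ 'd \<Rightarrow> real vec"
    and \<sigma> :: "nat \<Rightarrow> real"
    and \<phi>0 \<psi>0 :: "nat \<Rightarrow> real ^ 'd \<Rightarrow> real"
  assumes P0: "prob_space \<rho>0" and P1: "prob_space \<rho>1"
    and X0: "space \<rho>0 = X" and X1: "space \<rho>1 = X"
    and r_pos: "r \<ge> 1"
    and dim_\<alpha>: "\<And>x. x \<in> X \<Longrightarrow> \<alpha> x \<in> carrier_vec r"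
    and dim_\<beta>: "\<And>x. x \<in> X \<Longrightarrow> \<beta> x \<in> carrier_vec r"
    and meas_\<alpha>: "\<And>i. i < r \<Longrightarrow> (\<lambda>x. \<alpha> x $ i) \<in> borel_measurable \<rho>0"
    and L2_\<alpha>: "\<And>i. i < r \<Longrightarrow> integrable \<rho>0 (\<lambda>x. (\<alpha> x $ i)\<^sup>2)"
    and meas_\<beta>: "\<And>i. i < r \<Longrightarrow> (\<lambda>x. \<beta> x $ i) \<in> borel_measurable \<rho>1"
    and L2_\<beta>: "\<And>i. i < r \<Longrightarrow> integrable \<rho>1 (\<lambda>x. (\<beta> x $ i)\<^sup>2)"
    and factor: "\<And>x x'. x \<in> X \<Longrightarrow> x' \<in> X \<Longrightarrow> k x x' = \<alpha> x \<bullet> \<beta> x'"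
    and meas_\<phi>0: "\<And>i. i < r \<Longrightarrow> \<phi>0 i \<in> borel_measurable \<rho>0"
    and L2_\<phi>0: "\<And>i. i < r \<Longrightarrow> integrable \<rho>0 (\<lambda>x. (\<phi>0 i x)\<^sup>2)"
    and meas_\<psi>0: "\<And>i. i < r \<Longrightarrow> \<psi>0 i \<in> borel_measurable \<rho>1"
    and L2_\<psi>0: "\<And>i. i < r \<Longrightarrow> integrable \<rho>1 (\<lambda>x. (\<psi>0 i x)\<^sup>2)"
    and svd: "\<And>x x'. x \<in> X \<Longrightarrow> x' \<in> X \<Longrightarrow> k x x' = (\<Sum>i<r. \<sigma> i * \<phi>0 i x * \<psi>0 i x')"
    and orth_\<phi>0: "\<And>i j. i < r \<Longrightarrow> j < r \<Longrightarrow>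
        (\<integral>x. \<phi>0 i x * \<phi>0 j x \<partial>\<rho>0) = (if i = j then 1 else 0)"
    and orth_\<psi>0: "\<And>i j. i < r \<Longrightarrow> j < r \<Longrightarrow>
        (\<integral>x. \<psi>0 i x * \<psi>0 j x \<partial>\<rho>1) = (if i = j then 1 else 0)"
    and \<sigma>_first: "\<sigma> 0 = 1"
    and \<sigma>_mono: "\<And>i j. i \<le> j \<Longrightarrow> j < r \<Longrightarrow> \<sigma> j \<le> \<sigma> i"
    and \<sigma>_nonneg: "\<And>i. i < r \<Longrightarrow> 0 \<le> \<sigma> i"
    and inv_M0: "invertible_mat (second_moment \<rho>0 r \<alpha>)"
    and inv_M1: "invertible_mat (second_moment \<rho>1 r \<beta>)"
  shows "\<exists>U V. U \<in> carrier_mat r r \<and> V \<in> carrier_mat r r \<and>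
     transpose_mat U * U = 1\<^sub>m r \<and> transpose_mat V * V = 1\<^sub>m r \<and>
     S_sqrt \<rho>0 \<rho>1 r \<alpha> \<beta> = U * mat_diag r \<sigma> * transpose_mat V \<and>
     (let \<phi> = (\<lambda>x. transpose_mat U *\<^sub>v (mat_inv_sqrt (second_moment \<rho>0 r \<alpha>) *\<^sub>v \<alpha> x));
          \<psi> = (\<lambda>x'. transpose_mat V *\<^sub>v (mat_inv_sqrt (second_moment \<rho>1 r \<beta>) *\<^sub>v \<beta> x'))
      in second_moment \<rho>0 r \<phi> = 1\<^sub>m r \<and> second_moment \<rho>1 r \<psi> = 1\<^sub>m r \<and>
         (\<forall>x\<in>X. \<forall>x'\<in>X. k x x' = \<phi> x \<bullet> (mat_diag r \<sigma> *\<^sub>v \<psi> x')) \<and>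
         (\<forall>i<r. \<forall>x'\<in>X. koopman_adj \<rho>0 k (\<lambda>x. \<phi> x $ i) x' = \<sigma> i * \<psi> x' $ i) \<and>
         (\<forall>i<r. \<forall>x\<in>X. koopman \<rho>1 k (\<lambda>x'. \<psi> x' $ i) x = \<sigma> i * \<phi> x $ i))"
proof -
  have sp0: "space \<rho>0 = X" and sp1: "space \<rho>1 = X" using X0 X1 by auto
  define \<phi>v where "\<phi>v = (\<lambda>x. vec r (\<lambda>i. \<phi>0 i x))"
  define \<psi>v where "\<psi>v = (\<lambda>x. vec r (\<lambda>i. \<psi>0 i x))"
  have \<phi>v: "\<And>x. \<phi>v x \<in> carrier_vec r" unfolding \<phi>v_def by auto
  have \<psi>v: "\<And>x. \<psi>v x \<in> carrier_vec r" unfolding \<psi>v_def by auto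
  have \<phi>vi: "\<And>x i. i < r \<Longrightarrow> vec_index (\<phi>v x) i = \<phi>0 i x" unfolding \<phi>v_def by auto
  have \<psi>vi: "\<And>x i. i < r \<Longrightarrow> vec_index (\<psi>v x) i = \<psi>0 i x" unfolding \<psi>v_def by auto
  define M0 where "M0 = second_moment \<rho>0 r \<alpha>"
  define M1 where "M1 = second_moment \<rho>1 r \<beta>"
  have M0cm: "M0 = cm \<rho>0 r \<alpha> \<alpha>" unfolding M0_def second_moment_cm ..
  have M1cm: "M1 = cm \<rho>1 r \<beta> \<beta>" unfolding M1_def second_moment_cm ..
  have M0c: "M0 \<in> carrier_mat r r" and M1c: "M1 \<in> carrier_mat r r" unfolding M0cm M1cm by auto
  have iaa: "\<And>i j. i < r \<Longrightarrow> j < r \<Longrightarrow> integrable \<rho>0 (\<lambda>x. vec_index (\<alpha> x) i * vec_index (\<alpha> x) j)"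
    by (rule integrable_prod_L2) (auto intro: meas_\<alpha> L2_\<alpha>)
  have ia\<phi>: "\<And>i j. i < r \<Longrightarrow> j < r \<Longrightarrow> integrable \<rho>0 (\<lambda>x. vec_index (\<alpha> x) i * vec_index (\<phi>v x) j)"
    by (simp add: \<phi>vi) (rule integrable_prod_L2, auto intro: meas_\<alpha> L2_\<alpha> meas_\<phi>0 L2_\<phi>0)
  have i\<phi>a: "\<And>i j. i < r \<Longrightarrow> j < r \<Longrightarrow> integrable \<rho>0 (\<lambda>x. vec_index (\<phi>v x) i * vec_index (\<alpha> x) j)"
    by (simp add: \<phi>vi) (rule integrable_prod_L2, auto intro: meas_\<alpha> L2_\<alpha> meas_\<phi>0 L2_\<phi>0)
  have i\<phi>\<phi>: "\<And>i j. i < r \<Longrightarrow> j < r \<Longrightarrow> integrable \<rho>0 (\<lambda>x. vec_index (\<phi>v x) i * vec_index (\<phi>v x) j)"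
    by (simp add: \<phi>vi) (rule integrable_prod_L2, auto intro: meas_\<phi>0 L2_\<phi>0)
  have ibb: "\<And>i j. i < r \<Longrightarrow> j < r \<Longrightarrow> integrable \<rho>1 (\<lambda>x. vec_index (\<beta> x) i * vec_index (\<beta> x) j)"
    by (rule integrable_prod_L2) (auto intro: meas_\<beta> L2_\<beta>)
  have ib\<psi>: "\<And>i j. i < r \<Longrightarrow> j < r \<Longrightarrow> integrable \<rho>1 (\<lambda>x. vec_index (\<beta> x) i * vec_index (\<psi>v x) j)"
    by (simp add: \<psi>vi) (rule integrable_prod_L2, auto intro: meas_\<beta> L2_\<beta> meas_\<psi>0 L2_\<psi>0)
  have i\<psi>b: "\<And>i j. i < r \<Longrightarrow> j < r \<Longrightarrow> integrable \<rho>1 (\<lambda>x. vec_index (\<psi>v x) i * vec_index (\<beta> x) j)"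
    by (simp add: \<psi>vi) (rule integrable_prod_L2, auto intro: meas_\<beta> L2_\<beta> meas_\<psi>0 L2_\<psi>0)
  have i\<psi>\<psi>: "\<And>i j. i < r \<Longrightarrow> j < r \<Longrightarrow> integrable \<rho>1 (\<lambda>x. vec_index (\<psi>v x) i * vec_index (\<psi>v x) j)"
    by (simp add: \<psi>vi) (rule integrable_prod_L2, auto intro: meas_\<psi>0 L2_\<psi>0)
  have I0: "cm \<rho>0 r \<phi>v \<phi>v = 1\<^sub>m r"
    by (rule eq_matI) (auto simp: cm_def \<phi>vi orth_\<phi>0)
  have I1: "cm \<rho>1 r \<psi>v \<psi>v = 1\<^sub>m r"
    by (rule eq_matI) (auto simp: cm_def \<psi>vi orth_\<psi>0)
  define Sg where "Sg = mat_diag r \<sigma>"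
  have Sg: "Sg \<in> carrier_mat r r" unfolding Sg_def by auto
  have SgT: "transpose_mat Sg = Sg" unfolding Sg_def by (rule mat_diag_transpose)
  define G where "G = cm \<rho>1 r \<beta> \<psi>v"
  define F where "F = cm \<rho>0 r \<alpha> \<phi>v"
  have G: "G \<in> carrier_mat r r" and F: "F \<in> carrier_mat r r" unfolding G_def F_def by auto
  have P1: "\<And>x. x \<in> X \<Longrightarrow> M1 *\<^sub>v \<alpha> x = (G * Sg) *\<^sub>v \<phi>v x"
  proof -
    fix x assume x: "x \<in> X"
    have eq: "\<And>y. y \<in> space \<rho>1 \<Longrightarrow> scalar_prod (\<beta> y) (\<alpha> x) = (\<Sum>i<r. \<sigma> i * \<phi>0 i x * vec_index (\<psi>v y) i)"
    proof -
      fix y assume y: "y \<in> space \<rho>1"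
      have "scalar_prod (\<beta> y) (\<alpha> x) = scalar_prod (\<alpha> x) (\<beta> y)"
        using dim_\<alpha>[OF x] dim_\<beta> y sp1 by (metis comm_scalar_prod)
      also have "\<dots> = k x y" using factor x y sp1 by simp
      also have "\<dots> = (\<Sum>i<r. \<sigma> i * \<phi>0 i x * \<psi>0 i y)" using svd x y sp1 by simp
      finally show "scalar_prod (\<beta> y) (\<alpha> x) = (\<Sum>i<r. \<sigma> i * \<phi>0 i x * vec_index (\<psi>v y) i)"
        by (simp add: \<psi>vi)
    qed
    have bc: "\<And>y. y \<in> space \<rho>1 \<Longrightarrow> \<beta> y \<in> carrier_vec r" using dim_\<beta> sp1 by simp
    have "M1 *\<^sub>v \<alpha> x = G *\<^sub>v vec r (\<lambda>i. \<sigma> i * \<phi>0 i x)"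
      unfolding M1cm G_def by (rule proj_lemma[OF eq bc dim_\<alpha>[OF x] ibb ib\<psi>])
    also have "vec r (\<lambda>i. \<sigma> i * \<phi>0 i x) = Sg *\<^sub>v \<phi>v x"
      unfolding Sg_def by (subst mat_diag_mult_vec[OF \<phi>v]) (auto simp: \<phi>vi)
    also have "G *\<^sub>v (Sg *\<^sub>v \<phi>v x) = (G * Sg) *\<^sub>v \<phi>v x"
      using G Sg \<phi>v by (simp add: assoc_mult_mat_vec[of _ r r _ r])
    finally show "M1 *\<^sub>v \<alpha> x = (G * Sg) *\<^sub>v \<phi>v x" .
  qed
  have P2: "\<And>y. y \<in> X \<Longrightarrow> M0 *\<^sub>v \<beta> y = (F * Sg) *\<^sub>v \<psi>v y"
  proof -
    fix y assume y: "y \<in> X"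
    have eq: "\<And>x. x \<in> space \<rho>0 \<Longrightarrow> scalar_prod (\<alpha> x) (\<beta> y) = (\<Sum>i<r. \<sigma> i * \<psi>0 i y * vec_index (\<phi>v x) i)"
    proof -
      fix x assume x: "x \<in> space \<rho>0"
      have "scalar_prod (\<alpha> x) (\<beta> y) = k x y" using factor x y sp0 by simp
      also have "\<dots> = (\<Sum>i<r. \<sigma> i * \<phi>0 i x * \<psi>0 i y)" using svd x y sp0 by simp
      finally show "scalar_prod (\<alpha> x) (\<beta> y) = (\<Sum>i<r. \<sigma> i * \<psi>0 i y * vec_index (\<phi>v x) i)"
        by (simp add: \<phi>vi mult.commute mult.left_commute)
    qed
    have ac: "\<And>x. x \<in> space \<rho>0 \<Longrightarrow> \<alpha> x \<in> carrier_vec r" using dim_\<alpha> sp0 by simp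
    have "M0 *\<^sub>v \<beta> y = F *\<^sub>v vec r (\<lambda>i. \<sigma> i * \<psi>0 i y)"
      unfolding M0cm F_def by (rule proj_lemma[OF eq ac dim_\<beta>[OF y] iaa ia\<phi>])
    also have "vec r (\<lambda>i. \<sigma> i * \<psi>0 i y) = Sg *\<^sub>v \<psi>v y"
      unfolding Sg_def by (subst mat_diag_mult_vec[OF \<psi>v]) (auto simp: \<psi>vi)
    also have "F *\<^sub>v (Sg *\<^sub>v \<psi>v y) = (F * Sg) *\<^sub>v \<psi>v y"
      using F Sg \<psi>v by (simp add: assoc_mult_mat_vec[of _ r r _ r])
    finally show "M0 *\<^sub>v \<beta> y = (F * Sg) *\<^sub>v \<psi>v y" .
  qed
  obtain M0i where M0i: "M0i \<in> carrier_mat r r" and M0M0i: "M0 * M0i = 1\<^sub>m r" and M0iM0: "M0i * M0 = 1\<^sub>m r"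
    using invertible_obtain[OF inv_M0[folded M0_def] M0c] by auto
  obtain M1i where M1i: "M1i \<in> carrier_mat r r" and M1M1i: "M1 * M1i = 1\<^sub>m r" and M1iM1: "M1i * M1 = 1\<^sub>m r"
    using invertible_obtain[OF inv_M1[folded M1_def] M1c] by auto
  define C where "C = M1i * (G * Sg)"
  define D where "D = M0i * (F * Sg)"
  have C: "C \<in> carrier_mat r r" and D: "D \<in> carrier_mat r r" unfolding C_def D_def using M0i M1i G F Sg by auto
  have \<alpha>C: "\<And>x. x \<in> X \<Longrightarrow> \<alpha> x = C *\<^sub>v \<phi>v x"
  proof -
    fix x assume x: "x \<in> X"
    have "\<alpha> x = (M1i * M1) *\<^sub>v \<alpha> x" unfolding M1iM1 using dim_\<alpha>[OF x] by simp
    also have "\<dots> = M1i *\<^sub>v (M1 *\<^sub>v \<alpha> x)" using M1i M1c dim_\<alpha>[OF x] by (simp add: assoc_mult_mat_vec[of _ r r _ r])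
    also have "\<dots> = C *\<^sub>v \<phi>v x" unfolding P1[OF x] C_def using M1i G Sg \<phi>v
      by (simp add: assoc_mult_mat_vec[of _ r r _ r])
    finally show "\<alpha> x = C *\<^sub>v \<phi>v x" .
  qed
  have \<beta>D: "\<And>y. y \<in> X \<Longrightarrow> \<beta> y = D *\<^sub>v \<psi>v y"
  proof -
    fix y assume y: "y \<in> X"
    have "\<beta> y = (M0i * M0) *\<^sub>v \<beta> y" unfolding M0iM0 using dim_\<beta>[OF y] by simp
    also have "\<dots> = M0i *\<^sub>v (M0 *\<^sub>v \<beta> y)" using M0i M0c dim_\<beta>[OF y] by (simp add: assoc_mult_mat_vec[of _ r r _ r])
    also have "\<dots> = D *\<^sub>v \<psi>v y" unfolding P2[OF y] D_def using M0i F Sg \<psi>v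
      by (simp add: assoc_mult_mat_vec[of _ r r _ r])
    finally show "\<beta> y = D *\<^sub>v \<psi>v y" .
  qed
  have M0CC: "M0 = C * transpose_mat C"
  proof -
    have "M0 = C * cm \<rho>0 r \<phi>v \<alpha>" unfolding M0cm
      by (rule cm_left[OF _ C]) (use \<alpha>C sp0 \<phi>v i\<phi>a in auto)
    also have "cm \<rho>0 r \<phi>v \<alpha> = cm \<rho>0 r \<phi>v \<phi>v * transpose_mat C"
      by (rule cm_right[OF _ C]) (use \<alpha>C sp0 \<phi>v i\<phi>\<phi> in auto)
    finally show ?thesis unfolding I0 using C by simp
  qed
  have M1DD: "M1 = D * transpose_mat D"
  proof -
    have "M1 = D * cm \<rho>1 r \<psi>v \<beta>" unfolding M1cm
      by (rule cm_left[OF _ D]) (use \<beta>D sp1 \<psi>v i\<psi>b in auto)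
    also have "cm \<rho>1 r \<psi>v \<beta> = cm \<rho>1 r \<psi>v \<psi>v * transpose_mat D"
      by (rule cm_right[OF _ D]) (use \<beta>D sp1 \<psi>v i\<psi>\<psi> in auto)
    finally show ?thesis unfolding I1 using D by simp
  qed
  have GD: "G = D"
  proof -
    have "G = D * cm \<rho>1 r \<psi>v \<psi>v" unfolding G_def
      by (rule cm_left[OF _ D]) (use \<beta>D sp1 \<psi>v i\<psi>\<psi> in auto)
    thus ?thesis unfolding I1 using D by simp
  qed
  have M1C: "M1 * C = D * Sg"
  proof -
    have "cm \<rho>0 r (\<lambda>x. M1 *\<^sub>v \<alpha> x) \<phi>v = (M1 * C) * cm \<rho>0 r \<phi>v \<phi>v"
      by (rule cm_left) (use \<alpha>C sp0 \<phi>v i\<phi>\<phi> M1c C in \<open>auto simp: assoc_mult_mat_vec[of _ r r _ r]\<close>)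
    moreover have "cm \<rho>0 r (\<lambda>x. M1 *\<^sub>v \<alpha> x) \<phi>v = (G * Sg) * cm \<rho>0 r \<phi>v \<phi>v"
      by (rule cm_left) (use P1 sp0 \<phi>v i\<phi>\<phi> G Sg in auto)
    ultimately show ?thesis unfolding I0 GD using M1c C D Sg by simp
  qed
  define L where "L = transpose_mat D * M1i"
  have Lc: "L \<in> carrier_mat r r" unfolding L_def using D M1i by auto
  have DL: "D * L = 1\<^sub>m r"
  proof -
    have "D * L = (D * transpose_mat D) * M1i" unfolding L_def using D M1i
      by (simp add: assoc_mult_mat[of _ r r _ r _ r])
    thus ?thesis unfolding M1DD[symmetric] M1M1i .
  qed
  have LD: "L * D = 1\<^sub>m r" by (rule mat_mult_left_right_inverse[OF D Lc DL])
  have DtC: "transpose_mat D * C = Sg"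
  proof -
    have "transpose_mat D * C = (L * D) * (transpose_mat D * C)" unfolding LD
      by (rule left_mult_one_mat[symmetric]) (use D C in auto)
    also have "\<dots> = L * ((D * transpose_mat D) * C)" using Lc D C
      by (simp add: assoc_mult_mat[of _ r r _ r _ r])
    also have "\<dots> = L * (M1 * C)" unfolding M1DD ..
    also have "\<dots> = (L * D) * Sg" unfolding M1C using Lc D Sg by (simp add: assoc_mult_mat[of _ r r _ r _ r])
    finally show ?thesis unfolding LD using left_mult_one_mat[OF Sg] by simp
  qed
  have CtD: "transpose_mat C * D = Sg"
  proof -
    have "transpose_mat (transpose_mat D * C) = transpose_mat C * transpose_mat (transpose_mat D)"
      by (rule transpose_mult) (use D C in auto)
    hence "transpose_mat C * D = transpose_mat Sg" unfolding DtC transpose_transpose by simp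
    thus ?thesis unfolding SgT .
  qed
  have psdM0: "psd_mat r M0" unfolding psd_mat_def
  proof (intro conjI ballI)
    show "M0 \<in> carrier_mat r r" by (rule M0c)
    show "transpose_mat M0 = M0" unfolding M0CC using transpose_mult[of C r r "transpose_mat C" r] C by simp
    fix v :: "real vec" assume v: "v \<in> carrier_vec r"
    have "scalar_prod v (M0 *\<^sub>v v) = scalar_prod v (C *\<^sub>v (transpose_mat C *\<^sub>v v))"
      unfolding M0CC using C v by (simp add: assoc_mult_mat_vec[of _ r r _ r])
    also have "\<dots> = scalar_prod (transpose_mat C *\<^sub>v v) (transpose_mat C *\<^sub>v v)"
      using quad_transpose[OF C v, of "transpose_mat C *\<^sub>v v"] C v by simp
    also have "\<dots> \<ge> 0" by (rule sq_nonneg_vec)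
    finally show "0 \<le> scalar_prod v (M0 *\<^sub>v v)" .
  qed
  have psdM1: "psd_mat r M1" unfolding psd_mat_def
  proof (intro conjI ballI)
    show "M1 \<in> carrier_mat r r" by (rule M1c)
    show "transpose_mat M1 = M1" unfolding M1DD using transpose_mult[of D r r "transpose_mat D" r] D by simp
    fix v :: "real vec" assume v: "v \<in> carrier_vec r"
    have "scalar_prod v (M1 *\<^sub>v v) = scalar_prod v (D *\<^sub>v (transpose_mat D *\<^sub>v v))"
      unfolding M1DD using D v by (simp add: assoc_mult_mat_vec[of _ r r _ r])
    also have "\<dots> = scalar_prod (transpose_mat D *\<^sub>v v) (transpose_mat D *\<^sub>v v)"
      using quad_transpose[OF D v, of "transpose_mat D *\<^sub>v v"] D v by simp
    also have "\<dots> \<ge> 0" by (rule sq_nonneg_vec)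
    finally show "0 \<le> scalar_prod v (M1 *\<^sub>v v)" .
  qed
  define R0 where "R0 = mat_sqrt M0"
  define R1 where "R1 = mat_sqrt M1"
  have R0p: "psd_mat r R0" and R0R0: "R0 * R0 = M0"
    using mat_sqrt_props[OF psdM0 M0i M0iM0] unfolding R0_def by auto
  have R1p: "psd_mat r R1" and R1R1: "R1 * R1 = M1"
    using mat_sqrt_props[OF psdM1 M1i M1iM1] unfolding R1_def by auto
  have R0: "R0 \<in> carrier_mat r r" and R0s: "transpose_mat R0 = R0" using R0p unfolding psd_mat_def by auto
  have R1: "R1 \<in> carrier_mat r r" and R1s: "transpose_mat R1 = R1" using R1p unfolding psd_mat_def by auto
  define Z0 where "Z0 = R0 * M0i"
  define Z1 where "Z1 = R1 * M1i"
  have Z0: "Z0 \<in> carrier_mat r r" and Z1: "Z1 \<in> carrier_mat r r" unfolding Z0_def Z1_def using R0 R1 M0i M1i by auto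
  have R0Z0: "R0 * Z0 = 1\<^sub>m r"
  proof -
    have "R0 * Z0 = (R0 * R0) * M0i" unfolding Z0_def using R0 M0i by (simp add: assoc_mult_mat[of _ r r _ r _ r])
    thus ?thesis unfolding R0R0 M0M0i .
  qed
  have R1Z1: "R1 * Z1 = 1\<^sub>m r"
  proof -
    have "R1 * Z1 = (R1 * R1) * M1i" unfolding Z1_def using R1 M1i by (simp add: assoc_mult_mat[of _ r r _ r _ r])
    thus ?thesis unfolding R1R1 M1M1i .
  qed
  have Z0R0: "Z0 * R0 = 1\<^sub>m r" by (rule mat_mult_left_right_inverse[OF R0 Z0 R0Z0])
  have Z1R1: "Z1 * R1 = 1\<^sub>m r" by (rule mat_mult_left_right_inverse[OF R1 Z1 R1Z1])
  have iZ0: "mat_inv_sqrt (second_moment \<rho>0 r \<alpha>) = Z0"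
    unfolding mat_inv_sqrt_def M0_def[symmetric] R0_def[symmetric] by (rule mat_inv_eq[OF R0 Z0 R0Z0])
  have iZ1: "mat_inv_sqrt (second_moment \<rho>1 r \<beta>) = Z1"
    unfolding mat_inv_sqrt_def M1_def[symmetric] R1_def[symmetric] by (rule mat_inv_eq[OF R1 Z1 R1Z1])
  have R0Z0t: "R0 * transpose_mat Z0 = 1\<^sub>m r"
  proof -
    have "transpose_mat (Z0 * R0) = transpose_mat R0 * transpose_mat Z0" by (rule transpose_mult) (use Z0 R0 in auto)
    thus ?thesis unfolding Z0R0 R0s by simp
  qed
  have R1Z1t: "R1 * transpose_mat Z1 = 1\<^sub>m r"
  proof -
    have "transpose_mat (Z1 * R1) = transpose_mat R1 * transpose_mat Z1" by (rule transpose_mult) (use Z1 R1 in auto)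
    thus ?thesis unfolding Z1R1 R1s by simp
  qed
  define U where "U = Z0 * C"
  define V where "V = Z1 * D"
  have U: "U \<in> carrier_mat r r" and V: "V \<in> carrier_mat r r" unfolding U_def V_def using Z0 Z1 C D by auto
  have Ut: "transpose_mat U = transpose_mat C * transpose_mat Z0" unfolding U_def
    by (rule transpose_mult) (use Z0 C in auto)
  have Vt: "transpose_mat V = transpose_mat D * transpose_mat Z1" unfolding V_def
    by (rule transpose_mult) (use Z1 D in auto)
  have UUt: "U * transpose_mat U = 1\<^sub>m r"
  proof -
    have "U * transpose_mat U = (Z0 * C) * (transpose_mat C * transpose_mat Z0)"
      unfolding Ut by (simp add: U_def)
    also have "\<dots> = Z0 * (C * transpose_mat C) * transpose_mat Z0"
      using Z0 C by (simp add: assoc_mult_mat[of _ r r _ r _ r])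
    also have "\<dots> = (Z0 * R0) * (R0 * transpose_mat Z0)"
      unfolding M0CC[symmetric] R0R0[symmetric] using Z0 R0 by (simp add: assoc_mult_mat[of _ r r _ r _ r])
    also have "\<dots> = 1\<^sub>m r" unfolding Z0R0 R0Z0t by simp
    finally show ?thesis .
  qed
  have VVt: "V * transpose_mat V = 1\<^sub>m r"
  proof -
    have "V * transpose_mat V = (Z1 * D) * (transpose_mat D * transpose_mat Z1)"
      unfolding Vt by (simp add: V_def)
    also have "\<dots> = Z1 * (D * transpose_mat D) * transpose_mat Z1"
      using Z1 D by (simp add: assoc_mult_mat[of _ r r _ r _ r])
    also have "\<dots> = (Z1 * R1) * (R1 * transpose_mat Z1)"
      unfolding M1DD[symmetric] R1R1[symmetric] using Z1 R1 by (simp add: assoc_mult_mat[of _ r r _ r _ r])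
    also have "\<dots> = 1\<^sub>m r" unfolding Z1R1 R1Z1t by simp
    finally show ?thesis .
  qed
  have UtU: "transpose_mat U * U = 1\<^sub>m r" by (rule mat_mult_left_right_inverse[OF U _ UUt]) (use U in auto)
  have VtV: "transpose_mat V * V = 1\<^sub>m r" by (rule mat_mult_left_right_inverse[OF V _ VVt]) (use V in auto)
  have SVD: "S_sqrt \<rho>0 \<rho>1 r \<alpha> \<beta> = U * Sg * transpose_mat V"
  proof -
    have "U * Sg * transpose_mat V = Z0 * (C * (transpose_mat C * D) * transpose_mat D) * transpose_mat Z1"
      unfolding CtD Vt U_def using Z0 C Sg D Z1 by (simp add: assoc_mult_mat[of _ r r _ r _ r])
    also have "\<dots> = Z0 * ((C * transpose_mat C) * (D * transpose_mat D)) * transpose_mat Z1"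
      using C D by (simp add: assoc_mult_mat[of _ r r _ r _ r])
    also have "\<dots> = (Z0 * R0) * (R0 * R1) * (R1 * transpose_mat Z1)"
      unfolding M0CC[symmetric] M1DD[symmetric] R0R0[symmetric] R1R1[symmetric]
      using Z0 R0 R1 Z1 by (simp add: assoc_mult_mat[of _ r r _ r _ r])
    also have "\<dots> = R0 * R1" unfolding Z0R0 R1Z1t using R0 R1 by simp
    finally show ?thesis unfolding S_sqrt_def R0_def R1_def M0_def M1_def by simp
  qed
  have \<phi>eq: "\<And>x. x \<in> X \<Longrightarrow> transpose_mat U *\<^sub>v (Z0 *\<^sub>v \<alpha> x) = \<phi>v x"
  proof -
    fix x assume x: "x \<in> X"
    have "transpose_mat U *\<^sub>v (Z0 *\<^sub>v \<alpha> x) = (transpose_mat U * U) *\<^sub>v \<phi>v x"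
      unfolding \<alpha>C[OF x] U_def using U Z0 C \<phi>v by (simp add: assoc_mult_mat_vec[of _ r r _ r])
    thus "transpose_mat U *\<^sub>v (Z0 *\<^sub>v \<alpha> x) = \<phi>v x" unfolding UtU using \<phi>v by simp
  qed
  have \<psi>eq: "\<And>x. x \<in> X \<Longrightarrow> transpose_mat V *\<^sub>v (Z1 *\<^sub>v \<beta> x) = \<psi>v x"
  proof -
    fix x assume x: "x \<in> X"
    have "transpose_mat V *\<^sub>v (Z1 *\<^sub>v \<beta> x) = (transpose_mat V * V) *\<^sub>v \<psi>v x"
      unfolding \<beta>D[OF x] V_def using V Z1 D \<psi>v by (simp add: assoc_mult_mat_vec[of _ r r _ r])
    thus "transpose_mat V *\<^sub>v (Z1 *\<^sub>v \<beta> x) = \<psi>v x" unfolding VtV using \<psi>v by simp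
  qed
  have "second_moment \<rho>0 r (\<lambda>x. transpose_mat U *\<^sub>v (Z0 *\<^sub>v \<alpha> x)) = cm \<rho>0 r \<phi>v \<phi>v"
    unfolding second_moment_cm by (rule cm_cong) (use \<phi>eq sp0 in auto)
  hence SM0: "second_moment \<rho>0 r (\<lambda>x. transpose_mat U *\<^sub>v (Z0 *\<^sub>v \<alpha> x)) = 1\<^sub>m r" unfolding I0 .
  have "second_moment \<rho>1 r (\<lambda>x. transpose_mat V *\<^sub>v (Z1 *\<^sub>v \<beta> x)) = cm \<rho>1 r \<psi>v \<psi>v"
    unfolding second_moment_cm by (rule cm_cong) (use \<psi>eq sp1 in auto)
  hence SM1: "second_moment \<rho>1 r (\<lambda>x. transpose_mat V *\<^sub>v (Z1 *\<^sub>v \<beta> x)) = 1\<^sub>m r" unfolding I1 .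
  have KK: "\<forall>x\<in>X. \<forall>x'\<in>X. k x x' = scalar_prod (transpose_mat U *\<^sub>v (Z0 *\<^sub>v \<alpha> x))
      (mat_diag r \<sigma> *\<^sub>v (transpose_mat V *\<^sub>v (Z1 *\<^sub>v \<beta> x')))"
  proof (intro ballI)
    fix x x' assume x: "x \<in> X" and x': "x' \<in> X"
    have "scalar_prod (transpose_mat U *\<^sub>v (Z0 *\<^sub>v \<alpha> x)) (mat_diag r \<sigma> *\<^sub>v (transpose_mat V *\<^sub>v (Z1 *\<^sub>v \<beta> x')))
      = scalar_prod (\<phi>v x) (vec r (\<lambda>i. \<sigma> i * vec_index (\<psi>v x') i))"
      unfolding \<phi>eq[OF x] \<psi>eq[OF x'] mat_diag_mult_vec[OF \<psi>v] ..
    also have "\<dots> = (\<Sum>i<r. \<sigma> i * \<phi>0 i x * \<psi>0 i x')"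
      by (auto simp: scalar_prod_def \<phi>vi \<psi>vi lessThan_atLeast0 intro!: sum.cong)
    also have "\<dots> = k x x'" using svd x x' by simp
    finally show "k x x' = scalar_prod (transpose_mat U *\<^sub>v (Z0 *\<^sub>v \<alpha> x))
      (mat_diag r \<sigma> *\<^sub>v (transpose_mat V *\<^sub>v (Z1 *\<^sub>v \<beta> x')))" by simp
  qed
  have i\<phi>0: "\<And>i j. i < r \<Longrightarrow> j < r \<Longrightarrow> integrable \<rho>0 (\<lambda>x. \<phi>0 j x * \<phi>0 i x)"
    by (rule integrable_prod_L2) (auto intro: meas_\<phi>0 L2_\<phi>0)
  have i\<psi>0: "\<And>i j. i < r \<Longrightarrow> j < r \<Longrightarrow> integrable \<rho>1 (\<lambda>x. \<psi>0 j x * \<psi>0 i x)"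
    by (rule integrable_prod_L2) (auto intro: meas_\<psi>0 L2_\<psi>0)
  have KA: "\<forall>i<r. \<forall>x'\<in>X. koopman_adj \<rho>0 k (\<lambda>x. vec_index (transpose_mat U *\<^sub>v (Z0 *\<^sub>v \<alpha> x)) i) x'
      = \<sigma> i * vec_index (transpose_mat V *\<^sub>v (Z1 *\<^sub>v \<beta> x')) i"
  proof (intro allI impI ballI)
    fix i x' assume i: "i < r" and x': "x' \<in> X"
    have "koopman_adj \<rho>0 k (\<lambda>x. vec_index (transpose_mat U *\<^sub>v (Z0 *\<^sub>v \<alpha> x)) i) x'
       = (\<integral>x. (\<Sum>j<r. (\<sigma> j * \<psi>0 j x') * (\<phi>0 j x * \<phi>0 i x)) \<partial>\<rho>0)"
      unfolding koopman_adj_def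
    proof (rule Bochner_Integration.integral_cong[OF refl])
      fix x assume "x \<in> space \<rho>0"
      hence x: "x \<in> X" using sp0 by simp
      have "k x x' * vec_index (transpose_mat U *\<^sub>v (Z0 *\<^sub>v \<alpha> x)) i = (\<Sum>j<r. \<sigma> j * \<phi>0 j x * \<psi>0 j x') * \<phi>0 i x"
        using svd[OF x x'] \<phi>eq[OF x] \<phi>vi[OF i] by simp
      also have "\<dots> = (\<Sum>j<r. \<sigma> j * \<phi>0 j x * \<psi>0 j x' * \<phi>0 i x)" by (rule sum_distrib_right)
      also have "\<dots> = (\<Sum>j<r. (\<sigma> j * \<psi>0 j x') * (\<phi>0 j x * \<phi>0 i x))" by (rule sum.cong) (simp_all add: ac_simps)
      finally show "k x x' * vec_index (transpose_mat U *\<^sub>v (Z0 *\<^sub>v \<alpha> x)) i = (\<Sum>j<r. (\<sigma> j * \<psi>0 j x') * (\<phi>0 j x * \<phi>0 i x))" .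
    qed
    also have "\<dots> = (\<Sum>j<r. (\<sigma> j * \<psi>0 j x') * (if j = i then 1 else 0))"
      using i\<phi>0 i orth_\<phi>0 by (subst int_lin) auto
    also have "\<dots> = \<sigma> i * \<psi>0 i x'" by (rule sum_delta_mult[OF i])
    finally show "koopman_adj \<rho>0 k (\<lambda>x. vec_index (transpose_mat U *\<^sub>v (Z0 *\<^sub>v \<alpha> x)) i) x'
      = \<sigma> i * vec_index (transpose_mat V *\<^sub>v (Z1 *\<^sub>v \<beta> x')) i" using \<psi>eq[OF x'] \<psi>vi[OF i] by simp
  qed
  have KO: "\<forall>i<r. \<forall>x\<in>X. koopman \<rho>1 k (\<lambda>x'. vec_index (transpose_mat V *\<^sub>v (Z1 *\<^sub>v \<beta> x')) i) x
      = \<sigma> i * vec_index (transpose_mat U *\<^sub>v (Z0 *\<^sub>v \<alpha> x)) i"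
  proof (intro allI impI ballI)
    fix i x assume i: "i < r" and x: "x \<in> X"
    have "koopman \<rho>1 k (\<lambda>x'. vec_index (transpose_mat V *\<^sub>v (Z1 *\<^sub>v \<beta> x')) i) x
       = (\<integral>x'. (\<Sum>j<r. (\<sigma> j * \<phi>0 j x) * (\<psi>0 j x' * \<psi>0 i x')) \<partial>\<rho>1)"
      unfolding koopman_def
    proof (rule Bochner_Integration.integral_cong[OF refl])
      fix x' assume "x' \<in> space \<rho>1"
      hence x': "x' \<in> X" using sp1 by simp
      have "k x x' * vec_index (transpose_mat V *\<^sub>v (Z1 *\<^sub>v \<beta> x')) i = (\<Sum>j<r. \<sigma> j * \<phi>0 j x * \<psi>0 j x') * \<psi>0 i x'"
        using svd[OF x x'] \<psi>eq[OF x'] \<psi>vi[OF i] by simp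
      also have "\<dots> = (\<Sum>j<r. \<sigma> j * \<phi>0 j x * \<psi>0 j x' * \<psi>0 i x')" by (rule sum_distrib_right)
      also have "\<dots> = (\<Sum>j<r. (\<sigma> j * \<phi>0 j x) * (\<psi>0 j x' * \<psi>0 i x'))" by (rule sum.cong) (simp_all add: ac_simps)
      finally show "k x x' * vec_index (transpose_mat V *\<^sub>v (Z1 *\<^sub>v \<beta> x')) i = (\<Sum>j<r. (\<sigma> j * \<phi>0 j x) * (\<psi>0 j x' * \<psi>0 i x'))" .
    qed
    also have "\<dots> = (\<Sum>j<r. (\<sigma> j * \<phi>0 j x) * (if j = i then 1 else 0))"
      using i\<psi>0 i orth_\<psi>0 by (subst int_lin) auto
    also have "\<dots> = \<sigma> i * \<phi>0 i x" by (rule sum_delta_mult[OF i])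
    finally show "koopman \<rho>1 k (\<lambda>x'. vec_index (transpose_mat V *\<^sub>v (Z1 *\<^sub>v \<beta> x')) i) x
      = \<sigma> i * vec_index (transpose_mat U *\<^sub>v (Z0 *\<^sub>v \<alpha> x)) i" using \<phi>eq[OF x] \<phi>vi[OF i] by simp
  qed
  show ?thesis unfolding Let_def iZ0 iZ1
    by (rule exI[of _ U], rule exI[of _ V]) (intro conjI U V UtU VtV SVD[unfolded Sg_def] SM0 SM1 KK KA KO)
qed


end
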